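(* The category $\mathbf{Frm}$ of frames and frame morphisms is equivalent to the category $\mathbf{Cons}$ of constructible algebras and constructible morphisms.
   Context: An interior algebra is a pair $(A,\square)$ with $A$ a boolean algebra and $\square:A\to A$ satisfying $\square 1=1$, $\square(a\wedge b)=\square a\wedge\square b$, $\square a\le a$, $\square a\le\square\square a$; $\mathcal O A=\{a:\square a=a\}$ is the set of open elements. $A$ is essential if the boolean subalgebra of $A$ generated by $\mathcal O A$ is all of $A$. A constructible algebra is an essential interior algebra $A$ such that the poset $\mathcal O A$ is a frame. A constructible morphism $f:A\to B$ between constructible algebras is a boolean homomorphism with $f(\square a)\le\square f(a)$ for all $a\in A$ (so $f$ maps opens to opens) such that $f|_{\mathcal O A}:\mathcal O A\to\mathcal O B$ is a frame morphism (preserves arbitrary joins and finite meets). *)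

theory Defs
  imports Main
begin

definition is_lub :: "'a set \<Rightarrow> ('a \<Rightarrow> 'a \<Rightarrow> bool) \<Rightarrow> 'a set \<Rightarrow> 'a \<Rightarrow> bool" where
  "is_lub L le S x \<longleftrightarrow> x \<in> L \<and> (\<forall>s\<in>S. le s x) \<and> (\<forall>y\<in>L. (\<forall>s\<in>S. le s y) \<longrightarrow> le x y)"

definition is_glb :: "'a set \<Rightarrow> ('a \<Rightarrow> 'a \<Rightarrow> bool) \<Rightarrow> 'a set \<Rightarrow> 'a \<Rightarrow> bool" where
  "is_glb L le S x \<longleftrightarrow> x \<in> L \<and> (\<forall>s\<in>S. le x s) \<and> (\<forall>y\<in>L. (\<forall>s\<in>S. le y s) \<longrightarrow> le y x)"

definition partial_order_on' :: "'a set \<Rightarrow> ('a \<Rightarrow> 'a \<Rightarrow> bool) \<Rightarrow> bool" where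
  "partial_order_on' L le \<longleftrightarrow>
     (\<forall>x\<in>L. le x x) \<and>
     (\<forall>x\<in>L. \<forall>y\<in>L. le x y \<and> le y x \<longrightarrow> x = y) \<and>
     (\<forall>x\<in>L. \<forall>y\<in>L. \<forall>z\<in>L. le x y \<and> le y z \<longrightarrow> le x z)"

definition is_frame :: "'a set \<Rightarrow> ('a \<Rightarrow> 'a \<Rightarrow> bool) \<Rightarrow> bool" where
  "is_frame L le \<longleftrightarrow>
     partial_order_on' L le \<and>
     (\<forall>S\<subseteq>L. \<exists>x. is_lub L le S x) \<and>
     (\<forall>S\<subseteq>L. finite S \<longrightarrow> (\<exists>x. is_glb L le S x)) \<and>
     (\<forall>a\<in>L. \<forall>S\<subseteq>L. \<forall>x y. is_lub L le S x \<longrightarrow> is_glb L le {a, x} y \<longrightarrow>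
        is_lub L le {z. \<exists>s\<in>S. is_glb L le {a, s} z} y)"

definition frame_hom ::
  "'a set \<Rightarrow> ('a \<Rightarrow> 'a \<Rightarrow> bool) \<Rightarrow> 'b set \<Rightarrow> ('b \<Rightarrow> 'b \<Rightarrow> bool) \<Rightarrow> ('a \<Rightarrow> 'b) \<Rightarrow> bool" where
  "frame_hom L le M le' f \<longleftrightarrow>
     f ` L \<subseteq> M \<and>
     (\<forall>S\<subseteq>L. \<forall>x. is_lub L le S x \<longrightarrow> is_lub M le' (f ` S) (f x)) \<and>
     (\<forall>S\<subseteq>L. finite S \<longrightarrow> (\<forall>x. is_glb L le S x \<longrightarrow> is_glb M le' (f ` S) (f x)))"

definition frame_iso ::
  "'a set \<Rightarrow> ('a \<Rightarrow> 'a \<Rightarrow> bool) \<Rightarrow> 'b set \<Rightarrow> ('b \<Rightarrow> 'b \<Rightarrow> bool) \<Rightarrow> bool" where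
  "frame_iso L le M le' \<longleftrightarrow>
     (\<exists>f g. frame_hom L le M le' f \<and> frame_hom M le' L le g \<and>
            (\<forall>x\<in>L. g (f x) = x) \<and> (\<forall>y\<in>M. f (g y) = y))"

record 'a ialg =
  ia_carrier :: "'a set"
  ia_meet :: "'a \<Rightarrow> 'a \<Rightarrow> 'a"
  ia_join :: "'a \<Rightarrow> 'a \<Rightarrow> 'a"
  ia_compl :: "'a \<Rightarrow> 'a"
  ia_bot :: 'a
  ia_top :: 'a
  ia_box :: "'a \<Rightarrow> 'a"

definition ia_le :: "('a, 'm) ialg_scheme \<Rightarrow> 'a \<Rightarrow> 'a \<Rightarrow> bool" where
  "ia_le A x y \<longleftrightarrow> ia_meet A x y = x"

definition boolean_alg :: "('a, 'm) ialg_scheme \<Rightarrow> bool" where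
  "boolean_alg A \<longleftrightarrow> (let C = ia_carrier A; m = ia_meet A; j = ia_join A; c = ia_compl A in
     ia_bot A \<in> C \<and> ia_top A \<in> C \<and>
     (\<forall>x\<in>C. \<forall>y\<in>C. m x y \<in> C \<and> j x y \<in> C) \<and> (\<forall>x\<in>C. c x \<in> C) \<and>
     (\<forall>x\<in>C. \<forall>y\<in>C. \<forall>z\<in>C. m (m x y) z = m x (m y z) \<and> j (j x y) z = j x (j y z)) \<and>
     (\<forall>x\<in>C. \<forall>y\<in>C. m x y = m y x \<and> j x y = j y x) \<and>
     (\<forall>x\<in>C. \<forall>y\<in>C. m x (j x y) = x \<and> j x (m x y) = x) \<and>
     (\<forall>x\<in>C. \<forall>y\<in>C. \<forall>z\<in>C. m x (j y z) = j (m x y) (m x z)) \<and>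
     (\<forall>x\<in>C. j x (ia_bot A) = x \<and> m x (ia_top A) = x) \<and>
     (\<forall>x\<in>C. m x (c x) = ia_bot A \<and> j x (c x) = ia_top A))"

definition interior_alg :: "('a, 'm) ialg_scheme \<Rightarrow> bool" where
  "interior_alg A \<longleftrightarrow> boolean_alg A \<and>
     (\<forall>a\<in>ia_carrier A. ia_box A a \<in> ia_carrier A) \<and>
     ia_box A (ia_top A) = ia_top A \<and>
     (\<forall>a\<in>ia_carrier A. \<forall>b\<in>ia_carrier A. ia_box A (ia_meet A a b) = ia_meet A (ia_box A a) (ia_box A b)) \<and>
     (\<forall>a\<in>ia_carrier A. ia_le A (ia_box A a) a) \<and>
     (\<forall>a\<in>ia_carrier A. ia_le A (ia_box A a) (ia_box A (ia_box A a)))"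

definition opens :: "('a, 'm) ialg_scheme \<Rightarrow> 'a set" where
  "opens A = {a \<in> ia_carrier A. ia_box A a = a}"

definition bool_closed :: "('a, 'm) ialg_scheme \<Rightarrow> 'a set \<Rightarrow> bool" where
  "bool_closed A S \<longleftrightarrow> ia_bot A \<in> S \<and> ia_top A \<in> S \<and>
     (\<forall>x\<in>S. \<forall>y\<in>S. ia_meet A x y \<in> S \<and> ia_join A x y \<in> S) \<and> (\<forall>x\<in>S. ia_compl A x \<in> S)"

definition generated_subalg :: "('a, 'm) ialg_scheme \<Rightarrow> 'a set \<Rightarrow> 'a set" where
  "generated_subalg A X = \<Inter>{S. X \<subseteq> S \<and> S \<subseteq> ia_carrier A \<and> bool_closed A S}"

definition essential :: "('a, 'm) ialg_scheme \<Rightarrow> bool" where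
  "essential A \<longleftrightarrow> generated_subalg A (opens A) = ia_carrier A"

definition constructible_alg :: "('a, 'm) ialg_scheme \<Rightarrow> bool" where
  "constructible_alg A \<longleftrightarrow> interior_alg A \<and> essential A \<and> is_frame (opens A) (ia_le A)"

definition bool_hom :: "('a, 'm) ialg_scheme \<Rightarrow> ('b, 'n) ialg_scheme \<Rightarrow> ('a \<Rightarrow> 'b) \<Rightarrow> bool" where
  "bool_hom A B f \<longleftrightarrow> f ` ia_carrier A \<subseteq> ia_carrier B \<and>
     (\<forall>x\<in>ia_carrier A. \<forall>y\<in>ia_carrier A.
        f (ia_meet A x y) = ia_meet B (f x) (f y) \<and> f (ia_join A x y) = ia_join B (f x) (f y)) \<and>
     (\<forall>x\<in>ia_carrier A. f (ia_compl A x) = ia_compl B (f x)) \<and>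
     f (ia_bot A) = ia_bot B \<and> f (ia_top A) = ia_top B"

definition constructible_hom :: "('a, 'm) ialg_scheme \<Rightarrow> ('b, 'n) ialg_scheme \<Rightarrow> ('a \<Rightarrow> 'b) \<Rightarrow> bool" where
  "constructible_hom A B f \<longleftrightarrow> bool_hom A B f \<and>
     (\<forall>a\<in>ia_carrier A. ia_le B (f (ia_box A a)) (ia_box B (f a))) \<and>
     frame_hom (opens A) (ia_le A) (opens B) (ia_le B) f"

end

theory Submission
  imports Defs
begin


locale balg =
  fixes A :: "('a,'m) ialg_scheme"
  assumes ba: "boolean_alg A"
begin

abbreviation "C \<equiv> ia_carrier A"
abbreviation "mt \<equiv> ia_meet A"
abbreviation "jn \<equiv> ia_join A"
abbreviation "cp \<equiv> ia_compl A"
abbreviation "bt \<equiv> ia_bot A"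
abbreviation "tp \<equiv> ia_top A"
abbreviation "lq \<equiv> ia_le A"

lemma bt_in[simp]: "bt \<in> C" and tp_in[simp]: "tp \<in> C"
  and mt_in[simp]: "x \<in> C \<Longrightarrow> y \<in> C \<Longrightarrow> mt x y \<in> C"
  and jn_in[simp]: "x \<in> C \<Longrightarrow> y \<in> C \<Longrightarrow> jn x y \<in> C"
  and cp_in[simp]: "x \<in> C \<Longrightarrow> cp x \<in> C"
  using ba unfolding boolean_alg_def Let_def by auto

lemma mt_assoc: "x \<in> C \<Longrightarrow> y \<in> C \<Longrightarrow> z \<in> C \<Longrightarrow> mt (mt x y) z = mt x (mt y z)"
  and jn_assoc: "x \<in> C \<Longrightarrow> y \<in> C \<Longrightarrow> z \<in> C \<Longrightarrow> jn (jn x y) z = jn x (jn y z)"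
  and mt_comm: "x \<in> C \<Longrightarrow> y \<in> C \<Longrightarrow> mt x y = mt y x"
  and jn_comm: "x \<in> C \<Longrightarrow> y \<in> C \<Longrightarrow> jn x y = jn y x"
  and absorb1: "x \<in> C \<Longrightarrow> y \<in> C \<Longrightarrow> mt x (jn x y) = x"
  and absorb2: "x \<in> C \<Longrightarrow> y \<in> C \<Longrightarrow> jn x (mt x y) = x"
  and distr: "x \<in> C \<Longrightarrow> y \<in> C \<Longrightarrow> z \<in> C \<Longrightarrow> mt x (jn y z) = jn (mt x y) (mt x z)"
  and jn_bt[simp]: "x \<in> C \<Longrightarrow> jn x bt = x"
  and mt_tp[simp]: "x \<in> C \<Longrightarrow> mt x tp = x"
  and mt_cp: "x \<in> C \<Longrightarrow> mt x (cp x) = bt"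
  and jn_cp: "x \<in> C \<Longrightarrow> jn x (cp x) = tp"
  using ba unfolding boolean_alg_def Let_def by auto

lemma mt_idem[simp]: "x \<in> C \<Longrightarrow> mt x x = x"
  by (metis absorb1 absorb2 mt_in)
lemma jn_idem[simp]: "x \<in> C \<Longrightarrow> jn x x = x"
  by (metis absorb1 absorb2 jn_in)

lemma bt_jn[simp]: "x \<in> C \<Longrightarrow> jn bt x = x" by (metis jn_bt jn_comm bt_in)
lemma tp_mt[simp]: "x \<in> C \<Longrightarrow> mt tp x = x" by (metis mt_tp mt_comm tp_in)

lemma mt_bt[simp]: "x \<in> C \<Longrightarrow> mt x bt = bt"
  by (metis mt_cp mt_assoc mt_idem cp_in)
lemma bt_mt[simp]: "x \<in> C \<Longrightarrow> mt bt x = bt" by (metis mt_bt mt_comm bt_in)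
lemma jn_tp[simp]: "x \<in> C \<Longrightarrow> jn x tp = tp"
  by (metis jn_cp jn_assoc jn_idem cp_in)
lemma tp_jn[simp]: "x \<in> C \<Longrightarrow> jn tp x = tp" by (metis jn_tp jn_comm tp_in)

lemma distr2: "x \<in> C \<Longrightarrow> y \<in> C \<Longrightarrow> z \<in> C \<Longrightarrow> mt (jn y z) x = jn (mt y x) (mt z x)"
  by (metis distr mt_comm jn_in)

lemma jn_distr: "x \<in> C \<Longrightarrow> y \<in> C \<Longrightarrow> z \<in> C \<Longrightarrow> jn x (mt y z) = mt (jn x y) (jn x z)"
proof -
  assume h: "x \<in> C" "y \<in> C" "z \<in> C"
  have "mt (jn x y) (jn x z) = jn (mt (jn x y) x) (mt (jn x y) z)" using h by (simp add: distr)
  also have "mt (jn x y) x = x" using h by (metis absorb1 mt_comm jn_in)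
  also have "mt (jn x y) z = jn (mt x z) (mt y z)" using h by (simp add: distr2)
  also have "jn x (jn (mt x z) (mt y z)) = jn (jn x (mt x z)) (mt y z)" using h by (simp add: jn_assoc)
  also have "jn x (mt x z) = x" using h by (simp add: absorb2)
  finally show ?thesis by simp
qed

lemma jn_distr2: "x \<in> C \<Longrightarrow> y \<in> C \<Longrightarrow> z \<in> C \<Longrightarrow> jn (mt y z) x = mt (jn y x) (jn z x)"
  by (metis jn_distr jn_comm mt_in)

lemma cp_unique:
  assumes "x \<in> C" "y \<in> C" "mt x y = bt" "jn x y = tp"
  shows "y = cp x"
proof -
  have "y = mt y (jn x (cp x))" using assms by (simp add: jn_cp)
  also have "\<dots> = jn (mt y x) (mt y (cp x))" using assms by (simp add: distr)
  also have "\<dots> = mt y (cp x)" using assms by (simp add: mt_comm)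
  finally have 1: "y = mt y (cp x)" .
  have "cp x = mt (cp x) (jn x y)" using assms by simp
  also have "\<dots> = jn (mt (cp x) x) (mt (cp x) y)" by (metis distr cp_in assms(1,2))
  also have "\<dots> = mt (cp x) y" using assms by (simp add: mt_comm mt_cp)
  finally have 2: "cp x = mt (cp x) y" .
  show ?thesis using 1 2 assms by (metis mt_comm cp_in)
qed

lemma cp_cp[simp]: "x \<in> C \<Longrightarrow> cp (cp x) = x"
  by (metis cp_unique cp_in mt_cp jn_cp mt_comm jn_comm)

lemma cp_bt[simp]: "cp bt = tp"
  by (metis cp_unique bt_in tp_in bt_mt bt_jn)
lemma cp_tp[simp]: "cp tp = bt"
  by (metis cp_cp cp_bt bt_in)

lemma demorgan1: assumes "x \<in> C" "y \<in> C" shows "cp (mt x y) = jn (cp x) (cp y)"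
proof -
  have a: "mt (mt x y) (jn (cp x) (cp y)) = bt"
  proof -
    have "mt (mt x y) (jn (cp x) (cp y)) = jn (mt (mt x y) (cp x)) (mt (mt x y) (cp y))"
      using assms by (simp add: distr)
    also have "mt (mt x y) (cp x) = bt" using assms
      by (metis mt_assoc mt_comm mt_cp bt_mt cp_in mt_in)
    also have "mt (mt x y) (cp y) = bt" using assms
      by (metis mt_assoc mt_cp mt_bt cp_in)
    finally show ?thesis by simp
  qed
  have b: "jn (mt x y) (jn (cp x) (cp y)) = tp"
  proof -
    have "jn (mt x y) (jn (cp x) (cp y)) = mt (jn x (jn (cp x) (cp y))) (jn y (jn (cp x) (cp y)))"
      using assms by (simp add: jn_distr2)
    also have "jn x (jn (cp x) (cp y)) = tp" using assms
      by (metis jn_assoc jn_cp tp_jn cp_in)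
    also have "jn y (jn (cp x) (cp y)) = tp" using assms
      by (metis jn_assoc jn_comm jn_cp jn_tp cp_in jn_in)
    finally show ?thesis by simp
  qed
  show ?thesis using cp_unique[OF _ _ a b] assms by simp
qed

lemma demorgan2: assumes "x \<in> C" "y \<in> C" shows "cp (jn x y) = mt (cp x) (cp y)"
  using demorgan1[of "cp x" "cp y"] assms by (metis cp_cp cp_in mt_in)

lemma lq_def2: "lq x y \<longleftrightarrow> mt x y = x" by (simp add: ia_le_def)

lemma lq_jn: "x \<in> C \<Longrightarrow> y \<in> C \<Longrightarrow> lq x y \<longleftrightarrow> jn x y = y"
  unfolding lq_def2 by (metis absorb1 absorb2 mt_comm jn_comm)

lemma lq_refl[simp]: "lq x x \<longleftrightarrow> mt x x = x" by (simp add: lq_def2)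
lemma lq_refl'[simp]: "x \<in> C \<Longrightarrow> lq x x" by simp

lemma lq_trans: "x \<in> C \<Longrightarrow> y \<in> C \<Longrightarrow> z \<in> C \<Longrightarrow> lq x y \<Longrightarrow> lq y z \<Longrightarrow> lq x z"
  unfolding lq_def2 by (metis mt_assoc)

lemma lq_antisym: "x \<in> C \<Longrightarrow> y \<in> C \<Longrightarrow> lq x y \<Longrightarrow> lq y x \<Longrightarrow> x = y"
  unfolding lq_def2 by (metis mt_comm)

lemma mt_lq1: "x \<in> C \<Longrightarrow> y \<in> C \<Longrightarrow> lq (mt x y) x"
  unfolding lq_def2 by (metis mt_assoc mt_comm mt_idem)
lemma mt_lq2: "x \<in> C \<Longrightarrow> y \<in> C \<Longrightarrow> lq (mt x y) y"
  unfolding lq_def2 by (metis mt_assoc mt_idem)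
lemma mt_glb: "x \<in> C \<Longrightarrow> y \<in> C \<Longrightarrow> z \<in> C \<Longrightarrow> lq z x \<Longrightarrow> lq z y \<Longrightarrow> lq z (mt x y)"
  unfolding lq_def2 by (metis mt_assoc)
lemma jn_lq1: "x \<in> C \<Longrightarrow> y \<in> C \<Longrightarrow> lq x (jn x y)"
  unfolding lq_def2 by (simp add: absorb1)
lemma jn_lq2: "x \<in> C \<Longrightarrow> y \<in> C \<Longrightarrow> lq y (jn x y)"
  unfolding lq_def2 by (metis absorb1 jn_comm)
lemma jn_lub: "x \<in> C \<Longrightarrow> y \<in> C \<Longrightarrow> z \<in> C \<Longrightarrow> lq x z \<Longrightarrow> lq y z \<Longrightarrow> lq (jn x y) z"
  using lq_jn by (metis jn_assoc jn_in)

lemma lq_tp[simp]: "x \<in> C \<Longrightarrow> lq x tp" by (simp add: lq_def2)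
lemma bt_lq[simp]: "x \<in> C \<Longrightarrow> lq bt x" by (simp add: lq_def2)

lemma mt_mono: "x \<in> C \<Longrightarrow> y \<in> C \<Longrightarrow> x' \<in> C \<Longrightarrow> y' \<in> C \<Longrightarrow> lq x x' \<Longrightarrow> lq y y' \<Longrightarrow> lq (mt x y) (mt x' y')"
  by (meson lq_trans mt_glb mt_in mt_lq1 mt_lq2)
lemma jn_mono: "x \<in> C \<Longrightarrow> y \<in> C \<Longrightarrow> x' \<in> C \<Longrightarrow> y' \<in> C \<Longrightarrow> lq x x' \<Longrightarrow> lq y y' \<Longrightarrow> lq (jn x y) (jn x' y')"
  by (meson lq_trans jn_lub jn_in jn_lq1 jn_lq2)

lemma residual: assumes "x \<in> C" "y \<in> C" "z \<in> C"
  shows "lq (mt x y) z \<longleftrightarrow> lq x (jn (cp y) z)"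
proof
  assume h: "lq (mt x y) z"
  have "x = mt x (jn y (cp y))" using assms by (simp add: jn_cp)
  also have "\<dots> = jn (mt x y) (mt x (cp y))" using assms by (simp add: distr)
  finally have e: "x = jn (mt x y) (mt x (cp y))" .
  have "lq (jn (mt x y) (mt x (cp y))) (jn z (cp y))"
    using assms h by (intro jn_mono) (auto simp: mt_lq2)
  then show "lq x (jn (cp y) z)" using e assms by (metis jn_comm cp_in)
next
  assume h: "lq x (jn (cp y) z)"
  have "lq (mt x y) (mt (jn (cp y) z) y)" using assms h by (intro mt_mono) auto
  also have "mt (jn (cp y) z) y = jn (mt (cp y) y) (mt z y)" using assms by (simp add: distr2)
  also have "\<dots> = mt z y" using assms by (metis mt_cp mt_comm bt_jn cp_in mt_in)
  finally show "lq (mt x y) z" using assms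
    by (meson lq_trans mt_in mt_lq1 jn_in cp_in distr2)
qed

lemma residual2: assumes "x \<in> C" "y \<in> C" "z \<in> C"
  shows "lq (mt x (cp y)) z \<longleftrightarrow> lq x (jn y z)"
  using residual[of x "cp y" z] assms by simp

lemma lq_bt: "x \<in> C \<Longrightarrow> lq x bt \<Longrightarrow> x = bt"
  by (simp add: lq_def2)

end


locale ialg = balg A for A :: "('a,'m) ialg_scheme" +
  assumes ia: "interior_alg A"
begin

abbreviation "bx \<equiv> ia_box A"
abbreviation "OA \<equiv> opens A"

lemma bx_in[simp]: "x \<in> C \<Longrightarrow> bx x \<in> C"
  and bx_tp[simp]: "bx tp = tp"
  and bx_mt: "x \<in> C \<Longrightarrow> y \<in> C \<Longrightarrow> bx (mt x y) = mt (bx x) (bx y)"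
  and bx_lq: "x \<in> C \<Longrightarrow> lq (bx x) x"
  using ia unfolding interior_alg_def by auto

lemma bx_mono: "x \<in> C \<Longrightarrow> y \<in> C \<Longrightarrow> lq x y \<Longrightarrow> lq (bx x) (bx y)"
  unfolding lq_def2 by (metis bx_mt)

lemma O_C: "u \<in> OA \<Longrightarrow> u \<in> C" by (simp add: opens_def)
lemma O_bx: "u \<in> OA \<Longrightarrow> bx u = u" by (simp add: opens_def)
lemma O_I: "u \<in> C \<Longrightarrow> bx u = u \<Longrightarrow> u \<in> OA" by (simp add: opens_def)

lemma tp_O[simp]: "tp \<in> OA" by (simp add: O_I)
lemma bt_O[simp]: "bt \<in> OA" using bx_lq[of bt] lq_bt[of "bx bt"] by (intro O_I) auto
lemma mt_O[simp]: "u \<in> OA \<Longrightarrow> v \<in> OA \<Longrightarrow> mt u v \<in> OA"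
  by (intro O_I) (auto simp: O_C O_bx bx_mt)
lemma jn_O[simp]: "u \<in> OA \<Longrightarrow> v \<in> OA \<Longrightarrow> jn u v \<in> OA"
proof -
  assume h: "u \<in> OA" "v \<in> OA"
  then have c: "u \<in> C" "v \<in> C" by (auto simp: O_C)
  have "lq u (bx (jn u v))" using bx_mono[of u "jn u v"] c h by (simp add: O_bx jn_lq1)
  moreover have "lq v (bx (jn u v))" using bx_mono[of v "jn u v"] c h by (simp add: O_bx jn_lq2)
  ultimately have "lq (jn u v) (bx (jn u v))" using c by (simp add: jn_lub)
  then show ?thesis using c bx_lq[of "jn u v"] by (intro O_I) (auto intro: lq_antisym)
qed

lemma bx_O[simp]: "x \<in> C \<Longrightarrow> bx x \<in> OA"
  using ia unfolding interior_alg_def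
  by (intro O_I) (auto intro: lq_antisym)

lemma lub_pair: "u \<in> OA \<Longrightarrow> v \<in> OA \<Longrightarrow> is_lub OA lq {u, v} (jn u v)"
  unfolding is_lub_def by (auto simp: O_C jn_lq1 jn_lq2 jn_lub)
lemma glb_pair: "u \<in> OA \<Longrightarrow> v \<in> OA \<Longrightarrow> is_glb OA lq {u, v} (mt u v)"
  unfolding is_glb_def by (auto simp: O_C mt_lq1 mt_lq2 mt_glb)
lemma lub_empty: "is_lub OA lq {} bt"
  unfolding is_lub_def by (auto simp: O_C)
lemma glb_empty: "is_glb OA lq {} tp"
  unfolding is_glb_def by (auto simp: O_C)

lemma lub_unique: "is_lub OA lq S x \<Longrightarrow> is_lub OA lq S y \<Longrightarrow> x = y"
  unfolding is_lub_def by (metis O_C lq_antisym)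
lemma glb_unique: "is_glb OA lq S x \<Longrightarrow> is_glb OA lq S y \<Longrightarrow> x = y"
  unfolding is_glb_def by (metis O_C lq_antisym)

fun cnf :: "('a \<times> 'a) list \<Rightarrow> 'a" where
  "cnf [] = tp"
| "cnf ((u,v) # H) = mt (jn (cp u) v) (cnf H)"

definition okl :: "('a \<times> 'a) list \<Rightarrow> bool" where
  "okl H \<longleftrightarrow> set H \<subseteq> OA \<times> OA"

lemma okl_simps[simp]: "okl []" "okl ((u,v)#H) \<longleftrightarrow> u \<in> OA \<and> v \<in> OA \<and> okl H"
  "okl (H1 @ H2) \<longleftrightarrow> okl H1 \<and> okl H2"
  by (auto simp: okl_def)

lemma cnf_in[simp]: "okl H \<Longrightarrow> cnf H \<in> C"
  by (induction H rule: cnf.induct) (auto simp: O_C)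

lemma cnf_append: "okl H1 \<Longrightarrow> okl H2 \<Longrightarrow> cnf (H1 @ H2) = mt (cnf H1) (cnf H2)"
  by (induction H1 rule: cnf.induct) (auto simp: O_C mt_assoc)

definition prodl :: "('a \<times> 'a) list \<Rightarrow> ('a \<times> 'a) list \<Rightarrow> ('a \<times> 'a) list" where
  "prodl H1 H2 = concat (map (\<lambda>(u,v). map (\<lambda>(u',v'). (mt u u', jn v v')) H2) H1)"

lemma prodl_simps[simp]: "prodl [] H2 = []"
  "prodl ((u,v)#H1) H2 = map (\<lambda>(u',v'). (mt u u', jn v v')) H2 @ prodl H1 H2"
  by (auto simp: prodl_def)

lemma okl_map: "u \<in> OA \<Longrightarrow> v \<in> OA \<Longrightarrow> okl H2 \<Longrightarrow> okl (map (\<lambda>(u',v'). (mt u u', jn v v')) H2)"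
  by (induction H2) auto

lemma okl_prodl: "okl H1 \<Longrightarrow> okl H2 \<Longrightarrow> okl (prodl H1 H2)"
  by (induction H1) (auto simp: okl_map)

lemma cnf_jn1: "u \<in> OA \<Longrightarrow> v \<in> OA \<Longrightarrow> okl H2 \<Longrightarrow>
  jn (jn (cp u) v) (cnf H2) = cnf (map (\<lambda>(u',v'). (mt u u', jn v v')) H2)"
proof (induction H2)
  case Nil then show ?case by (simp add: O_C)
next
  case (Cons p H2)
  obtain u' v' where p: "p = (u',v')" by force
  have c: "u \<in> C" "v \<in> C" "u' \<in> C" "v' \<in> C" "cnf H2 \<in> C" using Cons p by (auto simp: O_C)
  have "jn (jn (cp u) v) (cnf (p # H2)) = mt (jn (jn (cp u) v) (jn (cp u') v')) (jn (jn (cp u) v) (cnf H2))"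
    using c p by (simp add: jn_distr)
  also have "jn (jn (cp u) v) (jn (cp u') v') = jn (cp (mt u u')) (jn v v')"
  proof -
    have "jn (jn (cp u) v) (jn (cp u') v') = jn (jn (cp u) (cp u')) (jn v v')"
      using c by (metis jn_assoc jn_comm cp_in jn_in)
    then show ?thesis using c by (simp add: demorgan1)
  qed
  also have "jn (jn (cp u) v) (cnf H2) = cnf (map (\<lambda>(u',v'). (mt u u', jn v v')) H2)"
    using Cons.IH Cons.prems p by simp
  finally show ?case using p by simp
qed

lemma cnf_jn: "okl H1 \<Longrightarrow> okl H2 \<Longrightarrow> jn (cnf H1) (cnf H2) = cnf (prodl H1 H2)"
proof (induction H1 rule: cnf.induct)
  case 1 then show ?case by simp
next
  case (2 u v H)
  have c: "u \<in> C" "v \<in> C" "cnf H \<in> C" "cnf H2 \<in> C" using 2 by (auto simp: O_C)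
  have "jn (cnf ((u,v)#H)) (cnf H2) = mt (jn (jn (cp u) v) (cnf H2)) (jn (cnf H) (cnf H2))"
    using c by (simp add: jn_distr2)
  also have "\<dots> = mt (cnf (map (\<lambda>(u',v'). (mt u u', jn v v')) H2)) (cnf (prodl H H2))"
    using 2 by (simp add: cnf_jn1)
  also have "\<dots> = cnf (prodl ((u,v)#H) H2)"
    using 2 by (simp add: cnf_append okl_map okl_prodl)
  finally show ?case .
qed

definition NF :: "'a set" where "NF = {cnf H | H. okl H}"

lemma NF_closed: "bool_closed A NF"
proof -
  have bt: "bt = cnf [(tp, bt)]" by simp
  have j: "x \<in> NF \<Longrightarrow> y \<in> NF \<Longrightarrow> jn x y \<in> NF" for x y
    unfolding NF_def by (auto simp: cnf_jn intro!: okl_prodl)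
  have m: "x \<in> NF \<Longrightarrow> y \<in> NF \<Longrightarrow> mt x y \<in> NF" for x y
    unfolding NF_def by clarify (metis cnf_append okl_simps(3))
  have c: "okl H \<Longrightarrow> cp (cnf H) \<in> NF" for H
  proof (induction H rule: cnf.induct)
    case 1 then show ?case using bt unfolding NF_def by (auto intro!: exI[where x="[(tp,bt)]"])
  next
    case (2 u v H)
    have cc: "u \<in> C" "v \<in> C" "cnf H \<in> C" using 2 by (auto simp: O_C)
    have "cp (cnf ((u,v)#H)) = jn (mt u (cp v)) (cp (cnf H))"
      using cc by (simp add: demorgan1 demorgan2)
    moreover have "mt u (cp v) = cnf [(tp,u),(v,bt)]" using cc by simp
    moreover have "cnf [(tp,u),(v,bt)] \<in> NF" using 2 unfolding NF_def
      by (auto intro!: exI[where x="[(tp,u),(v,bt)]"])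
    ultimately show ?case using j 2 by simp
  qed
  have b1: "bt \<in> NF" unfolding NF_def by (rule CollectI, rule exI[where x="[(tp,bt)]"]) simp
  have b2: "tp \<in> NF" unfolding NF_def by (rule CollectI, rule exI[where x="[]"]) simp
  have c': "x \<in> NF \<Longrightarrow> cp x \<in> NF" for x using c unfolding NF_def by blast
  show ?thesis unfolding bool_closed_def using j m c' b1 b2 by blast
qed

lemma NF_sub: "NF \<subseteq> C" unfolding NF_def by auto

lemma O_NF: "u \<in> OA \<Longrightarrow> u \<in> NF"
  unfolding NF_def by (auto simp: O_C intro!: exI[where x="[(tp,u)]"])

lemma essential_NF: assumes "essential A" "x \<in> C" shows "\<exists>H. okl H \<and> x = cnf H"
proof -
  have "generated_subalg A OA \<subseteq> NF"
    unfolding generated_subalg_def using NF_closed NF_sub O_NF by blast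
  then show ?thesis using assms unfolding essential_def NF_def by auto
qed

end



context balg begin
lemma mt_lc: "x \<in> C \<Longrightarrow> y \<in> C \<Longrightarrow> z \<in> C \<Longrightarrow> mt x (mt y z) = mt y (mt x z)"
  by (metis mt_assoc mt_comm)
lemmas mt_ac = mt_assoc mt_comm mt_lc
lemma mt_mono_r: "x \<in> C \<Longrightarrow> y \<in> C \<Longrightarrow> y' \<in> C \<Longrightarrow> lq y y' \<Longrightarrow> lq (mt x y) (mt x y')"
  by (rule mt_mono) auto
lemma mt_mono_l: "x \<in> C \<Longrightarrow> x' \<in> C \<Longrightarrow> y \<in> C \<Longrightarrow> lq x x' \<Longrightarrow> lq (mt x y) (mt x' y)"
  by (rule mt_mono) auto
end

lemma frame_hom_cong:
  assumes "frame_hom L le M le' h" "\<forall>x\<in>L. f x = h x"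
  shows "frame_hom L le M le' f"
proof -
  have i: "S \<subseteq> L \<Longrightarrow> f ` S = h ` S" for S using assms(2) by (intro image_cong) auto
  have l: "is_lub L le S x \<Longrightarrow> x \<in> L" "is_glb L le S x \<Longrightarrow> x \<in> L" for S x
    by (auto simp: is_lub_def is_glb_def)
  show ?thesis using assms(1) unfolding frame_hom_def
    by (metis i l assms(2) order_refl)
qed

locale hctx = A: ialg A + B: ialg B for A :: "('a,'m) ialg_scheme" and B :: "('b,'n) ialg_scheme" +
  fixes h :: "'a \<Rightarrow> 'b"
  assumes fh: "frame_hom (opens A) (ia_le A) (opens B) (ia_le B) h"
begin

lemma fh1: "h ` A.OA \<subseteq> B.OA" using fh[unfolded frame_hom_def] by (rule conjunct1)
lemma fh2: "\<forall>S\<subseteq>A.OA. \<forall>x. is_lub A.OA A.lq S x \<longrightarrow> is_lub B.OA B.lq (h ` S) (h x)"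
  using fh[unfolded frame_hom_def] by (rule conjunct2[THEN conjunct1])
lemma fh3: "\<forall>S\<subseteq>A.OA. finite S \<longrightarrow> (\<forall>x. is_glb A.OA A.lq S x \<longrightarrow> is_glb B.OA B.lq (h ` S) (h x))"
  using fh[unfolded frame_hom_def] by (rule conjunct2[THEN conjunct2])

lemma h_O[simp]: "u \<in> A.OA \<Longrightarrow> h u \<in> B.OA"
  using fh1 by (rule subsetD) (rule imageI)

lemma fh_glb: "S \<subseteq> A.OA \<Longrightarrow> finite S \<Longrightarrow> is_glb A.OA A.lq S x \<Longrightarrow> is_glb B.OA B.lq (h ` S) (h x)"
  using fh3 by simp
lemma fh_lub: "S \<subseteq> A.OA \<Longrightarrow> is_lub A.OA A.lq S x \<Longrightarrow> is_lub B.OA B.lq (h ` S) (h x)"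
  using fh2 by simp

lemma h_mt: "u \<in> A.OA \<Longrightarrow> v \<in> A.OA \<Longrightarrow> h (A.mt u v) = B.mt (h u) (h v)"
proof -
  assume a: "u \<in> A.OA" "v \<in> A.OA"
  have "is_glb B.OA B.lq (h ` {u,v}) (h (A.mt u v))"
    using a by (intro fh_glb A.glb_pair) auto
  then have "is_glb B.OA B.lq {h u, h v} (h (A.mt u v))" by (metis image_insert image_empty)
  then show ?thesis using B.glb_pair[OF h_O[OF a(1)] h_O[OF a(2)]] B.glb_unique by blast
qed

lemma h_jn: "u \<in> A.OA \<Longrightarrow> v \<in> A.OA \<Longrightarrow> h (A.jn u v) = B.jn (h u) (h v)"
proof -
  assume a: "u \<in> A.OA" "v \<in> A.OA"
  have "is_lub B.OA B.lq (h ` {u,v}) (h (A.jn u v))"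
    using a by (intro fh_lub A.lub_pair) auto
  then have "is_lub B.OA B.lq {h u, h v} (h (A.jn u v))" by (metis image_insert image_empty)
  then show ?thesis using B.lub_pair[OF h_O[OF a(1)] h_O[OF a(2)]] B.lub_unique by blast
qed

lemma h_tp[simp]: "h A.tp = B.tp"
proof -
  have "is_glb B.OA B.lq (h ` {}) (h A.tp)"
    by (intro fh_glb A.glb_empty) auto
  then show ?thesis using B.glb_empty B.glb_unique by (metis image_empty)
qed

lemma h_bt[simp]: "h A.bt = B.bt"
proof -
  have "is_lub B.OA B.lq (h ` {}) (h A.bt)"
    by (intro fh_lub A.lub_empty) auto
  then show ?thesis using B.lub_empty B.lub_unique by (metis image_empty)
qed

lemma h_mono: "u \<in> A.OA \<Longrightarrow> v \<in> A.OA \<Longrightarrow> A.lq u v \<Longrightarrow> B.lq (h u) (h v)"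
  by (simp add: A.lq_def2 B.lq_def2 h_mt[symmetric])

definition hmap :: "('a \<times> 'a) list \<Rightarrow> ('b \<times> 'b) list" where
  "hmap H = map (\<lambda>(u,v). (h u, h v)) H"

lemma hmap_simps[simp]: "hmap [] = []" "hmap ((u,v)#H) = (h u, h v) # hmap H"
  "hmap (H1 @ H2) = hmap H1 @ hmap H2"
  by (auto simp: hmap_def)

lemma okl_hmap[simp]: "A.okl H \<Longrightarrow> B.okl (hmap H)"
  by (induction H rule: A.cnf.induct) auto

lemma hmap_map: "u \<in> A.OA \<Longrightarrow> v \<in> A.OA \<Longrightarrow> A.okl H2 \<Longrightarrow>
  hmap (map (\<lambda>(u',v'). (A.mt u u', A.jn v v')) H2) = map (\<lambda>(u',v'). (B.mt (h u) u', B.jn (h v) v')) (hmap H2)"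
  by (induction H2 rule: A.cnf.induct) (auto simp: h_mt h_jn)

lemma hmap_prodl: "A.okl H1 \<Longrightarrow> A.okl H2 \<Longrightarrow> hmap (A.prodl H1 H2) = B.prodl (hmap H1) (hmap H2)"
  by (induction H1 rule: A.cnf.induct) (auto simp: hmap_map)

lemma K: "A.okl H \<Longrightarrow> p \<in> A.OA \<Longrightarrow> q \<in> A.OA \<Longrightarrow> A.lq (A.mt p (A.cnf H)) q \<Longrightarrow>
   B.lq (B.mt (h p) (B.cnf (hmap H))) (h q)"
proof (induction H arbitrary: p q rule: A.cnf.induct)
  case 1
  then show ?case using h_mono[of p q] by (simp add: A.O_C B.O_C)
next
  case (2 u v H)
  let ?R = "A.cnf H"
  let ?RB = "B.cnf (hmap H)"
  have o: "u \<in> A.OA" "v \<in> A.OA" "A.okl H" using 2 by auto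
  have c: "u \<in> A.C" "v \<in> A.C" "p \<in> A.C" "q \<in> A.C" "?R \<in> A.C" using o 2 by (auto simp: A.O_C)
  have cb: "h u \<in> B.C" "h v \<in> B.C" "h p \<in> B.C" "h q \<in> B.C" "?RB \<in> B.C"
    using o 2 by (auto simp: B.O_C)
  have big: "A.lq (A.mt p (A.mt (A.jn (A.cp u) v) ?R)) q" using 2 by simp
  have "A.lq (A.mt (A.mt p ?R) (A.cp u)) (A.mt p (A.mt (A.jn (A.cp u) v) ?R))"
  proof -
    have "A.mt (A.mt p ?R) (A.cp u) = A.mt p (A.mt (A.cp u) ?R)"
      using c A.mt_assoc[of p ?R "A.cp u"] A.mt_comm[of ?R "A.cp u"] by simp
    moreover have "A.lq (A.mt p (A.mt (A.cp u) ?R)) (A.mt p (A.mt (A.jn (A.cp u) v) ?R))"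
      by (rule A.mt_mono_r[OF c(3) _ _ A.mt_mono_l[OF _ _ c(5) A.jn_lq1]]) (use c in simp_all)
    ultimately show ?thesis by (simp only:)
  qed
  note t = this
  have "A.lq (A.mt (A.mt p ?R) (A.cp u)) q" by (rule A.lq_trans[OF _ _ _ t big]) (use c in simp_all)
  then have "A.lq (A.mt p ?R) (A.jn u q)" using c A.residual2[of "A.mt p ?R" u q] by simp
  then have "A.lq (A.mt p ?R) (A.jn q u)" using A.jn_comm[OF c(1) c(4)] by simp
  then have a: "B.lq (B.mt (h p) ?RB) (B.jn (h q) (h u))"
    using 2(1)[of p "A.jn q u"] o 2 by (simp add: h_jn)
  have "A.lq (A.mt (A.mt p v) ?R) (A.mt p (A.mt (A.jn (A.cp u) v) ?R))"
  proof -
    have "A.mt (A.mt p v) ?R = A.mt p (A.mt v ?R)" using c A.mt_assoc[of p v ?R] by simp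
    moreover have "A.lq (A.mt p (A.mt v ?R)) (A.mt p (A.mt (A.jn (A.cp u) v) ?R))"
      by (rule A.mt_mono_r[OF c(3) _ _ A.mt_mono_l[OF _ _ c(5) A.jn_lq2]]) (use c in simp_all)
    ultimately show ?thesis by (simp only:)
  qed
  note t = this
  have "A.lq (A.mt (A.mt p v) ?R) q" by (rule A.lq_trans[OF _ _ _ t big]) (use c in simp_all)
  then have b: "B.lq (B.mt (B.mt (h p) (h v)) ?RB) (h q)"
    using 2(1)[of "A.mt p v" q] o 2 by (simp add: h_mt)
  have e: "B.mt (h p) (B.cnf (hmap ((u,v)#H))) =
      B.jn (B.mt (B.mt (h p) ?RB) (B.cp (h u))) (B.mt (B.mt (h p) (h v)) ?RB)"
  proof -
    have j: "B.jn (B.cp (h u)) (h v) \<in> B.C" using cb by simp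
    have "B.mt (h p) (B.cnf (hmap ((u,v)#H))) = B.mt (h p) (B.mt (B.jn (B.cp (h u)) (h v)) ?RB)"
      by simp
    also have "\<dots> = B.mt (h p) (B.mt ?RB (B.jn (B.cp (h u)) (h v)))"
      using B.mt_comm[OF j cb(5)] by simp
    also have "\<dots> = B.mt (B.mt (h p) ?RB) (B.jn (B.cp (h u)) (h v))"
      using B.mt_assoc[OF cb(3) cb(5) j] by simp
    also have "\<dots> = B.jn (B.mt (B.mt (h p) ?RB) (B.cp (h u))) (B.mt (B.mt (h p) ?RB) (h v))"
      using cb by (simp add: B.distr)
    also have "B.mt (B.mt (h p) ?RB) (h v) = B.mt (B.mt (h p) (h v)) ?RB"
      using B.mt_assoc[OF cb(3) cb(5) cb(2)] B.mt_assoc[OF cb(3) cb(2) cb(5)] B.mt_comm[OF cb(2) cb(5)] by simp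
    finally show ?thesis .
  qed
  have a': "B.lq (B.mt (B.mt (h p) ?RB) (B.cp (h u))) (h q)"
    using a cb B.residual2[of "B.mt (h p) ?RB" "h u" "h q"] B.jn_comm[OF cb(1) cb(4)] by simp
  show ?case unfolding e using a' b cb by (intro B.jn_lub) auto
qed

lemma WD: "A.okl H1 \<Longrightarrow> A.okl H2 \<Longrightarrow> A.lq (A.cnf H1) (A.cnf H2) \<Longrightarrow>
  B.lq (B.cnf (hmap H1)) (B.cnf (hmap H2))"
proof (induction H2 rule: A.cnf.induct)
  case 1 then show ?case by simp
next
  case (2 u v H)
  have o: "u \<in> A.OA" "v \<in> A.OA" "A.okl H" using 2 by auto
  have c: "u \<in> A.C" "v \<in> A.C" "A.cnf H1 \<in> A.C" "A.cnf H \<in> A.C" using o 2 by (auto simp: A.O_C)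
  have cb: "h u \<in> B.C" "h v \<in> B.C" "B.cnf (hmap H1) \<in> B.C" "B.cnf (hmap H) \<in> B.C"
    using o 2 by (auto simp: B.O_C)
  have l: "A.lq (A.cnf H1) (A.mt (A.jn (A.cp u) v) (A.cnf H))" using 2 by simp
  have l1: "A.lq (A.cnf H1) (A.jn (A.cp u) v)"
    by (rule A.lq_trans[OF _ _ _ l A.mt_lq1]) (use c in simp_all)
  have l2: "A.lq (A.cnf H1) (A.cnf H)"
    by (rule A.lq_trans[OF _ _ _ l A.mt_lq2]) (use c in simp_all)
  have "A.lq (A.mt (A.cnf H1) u) v" using l1 c A.residual[of "A.cnf H1" u v] by simp
  then have "A.lq (A.mt u (A.cnf H1)) v" using A.mt_comm[OF c(1) c(3)] by simp
  then have "B.lq (B.mt (h u) (B.cnf (hmap H1))) (h v)" using K 2 o by blast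
  then have "B.lq (B.mt (B.cnf (hmap H1)) (h u)) (h v)" using B.mt_comm[OF cb(1) cb(3)] by simp
  then have "B.lq (B.cnf (hmap H1)) (B.jn (B.cp (h u)) (h v))" using cb B.residual[of "B.cnf (hmap H1)" "h u" "h v"] by simp
  moreover have "B.lq (B.cnf (hmap H1)) (B.cnf (hmap H))" using 2 o l2 by blast
  ultimately show ?case using cb by (simp add: B.mt_glb)
qed

definition f :: "'a \<Rightarrow> 'b" where
  "f x = B.cnf (hmap (SOME H. A.okl H \<and> x = A.cnf H))"

lemma f_cnf: assumes "A.okl H" shows "f (A.cnf H) = B.cnf (hmap H)"
proof -
  let ?H = "SOME H'. A.okl H' \<and> A.cnf H = A.cnf H'"
  have s: "A.okl ?H \<and> A.cnf H = A.cnf ?H"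
    using someI[of "\<lambda>H'. A.okl H' \<and> A.cnf H = A.cnf H'" H] assms by simp
  have "B.lq (B.cnf (hmap ?H)) (B.cnf (hmap H))" using s assms WD by (simp add: A.lq_def2)
  moreover have "B.lq (B.cnf (hmap H)) (B.cnf (hmap ?H))" using s assms WD[of H ?H] by (simp add: A.lq_def2)
  ultimately show ?thesis unfolding f_def using s assms by (intro B.lq_antisym) auto
qed

lemma f_O: "u \<in> A.OA \<Longrightarrow> f u = h u"
  using f_cnf[of "[(A.tp,u)]"] by (simp add: A.O_C B.O_C)

lemma f_bt: "f A.bt = B.bt"
  using f_cnf[of "[(A.tp,A.bt)]"] by simp
lemma f_tp: "f A.tp = B.tp"
  using f_cnf[of "[]"] by simp

context
  assumes ess: "essential A"
begin

lemma nf: "x \<in> A.C \<Longrightarrow> \<exists>H. A.okl H \<and> x = A.cnf H"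
  using A.essential_NF ess by blast

lemma f_in: "x \<in> A.C \<Longrightarrow> f x \<in> B.C"
  using nf f_cnf by force

lemma f_mt: "x \<in> A.C \<Longrightarrow> y \<in> A.C \<Longrightarrow> f (A.mt x y) = B.mt (f x) (f y)"
proof -
  assume "x \<in> A.C" "y \<in> A.C"
  then obtain H1 H2 where "A.okl H1" "x = A.cnf H1" "A.okl H2" "y = A.cnf H2" using nf by blast
  then show ?thesis using f_cnf[of "H1 @ H2"] by (simp add: A.cnf_append B.cnf_append f_cnf)
qed

lemma f_jn: "x \<in> A.C \<Longrightarrow> y \<in> A.C \<Longrightarrow> f (A.jn x y) = B.jn (f x) (f y)"
proof -
  assume "x \<in> A.C" "y \<in> A.C"
  then obtain H1 H2 where "A.okl H1" "x = A.cnf H1" "A.okl H2" "y = A.cnf H2" using nf by blast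
  then show ?thesis using f_cnf[of "A.prodl H1 H2"]
    by (simp add: A.cnf_jn B.cnf_jn f_cnf A.okl_prodl hmap_prodl)
qed

lemma f_cp: "x \<in> A.C \<Longrightarrow> f (A.cp x) = B.cp (f x)"
proof -
  assume x: "x \<in> A.C"
  have "B.mt (f x) (f (A.cp x)) = B.bt" using x f_mt[of x "A.cp x"] by (simp add: A.mt_cp f_bt)
  moreover have "B.jn (f x) (f (A.cp x)) = B.tp" using x f_jn[of x "A.cp x"] by (simp add: A.jn_cp f_tp)
  ultimately show ?thesis using x f_in B.cp_unique by simp
qed

lemma f_box_cnf: "A.okl H \<Longrightarrow> B.lq (f (A.bx (A.cnf H))) (B.bx (f (A.cnf H)))"
proof (induction H rule: A.cnf.induct)
  case 1 then show ?case by (simp add: f_tp)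
next
  case (2 u v H)
  let ?c = "A.jn (A.cp u) v"
  let ?R = "A.cnf H"
  let ?w = "A.bx ?c"
  have o: "u \<in> A.OA" "v \<in> A.OA" "A.okl H" using 2 by auto
  have c: "u \<in> A.C" "v \<in> A.C" "?R \<in> A.C" "?c \<in> A.C" "?w \<in> A.C" using o by (auto simp: A.O_C)
  have cb: "h u \<in> B.C" "h v \<in> B.C" "f ?R \<in> B.C" "h ?w \<in> B.C" using o c f_in by (auto simp: B.O_C)
  have "A.lq ?w ?c" using c A.bx_lq by blast
  then have "A.lq (A.mt ?w u) v" using c A.residual by blast
  then have "B.lq (h (A.mt ?w u)) (h v)" using o c by (intro h_mono) auto
  then have "B.lq (B.mt (h ?w) (h u)) (h v)" using o c by (simp add: h_mt)
  then have "B.lq (h ?w) (B.jn (B.cp (h u)) (h v))" using cb B.residual by blast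
  then have "B.lq (B.bx (h ?w)) (B.bx (B.jn (B.cp (h u)) (h v)))" using cb by (intro B.bx_mono) auto
  then have w: "B.lq (f ?w) (B.bx (B.jn (B.cp (h u)) (h v)))" using c B.O_bx f_O by simp
  have ih: "B.lq (f (A.bx ?R)) (B.bx (f ?R))" using 2 by auto
  have "f (A.bx (A.cnf ((u,v)#H))) = B.mt (f ?w) (f (A.bx ?R))"
    using c by (simp add: A.bx_mt f_mt)
  moreover have "f (A.cnf ((u,v)#H)) = B.mt (B.jn (B.cp (h u)) (h v)) (f ?R)"
    using o f_cnf[of "(u,v)#H"] f_cnf[of H] by simp
  moreover have "B.lq (B.mt (f ?w) (f (A.bx ?R))) (B.mt (B.bx (B.jn (B.cp (h u)) (h v))) (B.bx (f ?R)))"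
    using w ih cb c f_in by (intro B.mt_mono) auto
  ultimately show ?case using cb by (simp add: B.bx_mt)
qed

lemma f_chom: "constructible_hom A B f"
proof -
  have bh: "bool_hom A B f" unfolding bool_hom_def
    using f_in f_mt f_jn f_cp f_bt f_tp by auto
  have bx: "\<forall>a\<in>A.C. B.lq (f (A.bx a)) (B.bx (f a))"
    using nf f_box_cnf by blast
  have fr: "frame_hom A.OA A.lq B.OA B.lq f"
    using frame_hom_cong[OF fh] f_O by blast
  show ?thesis unfolding constructible_hom_def using bh bx fr by blast
qed

end
end

lemma constructible_ialg: "constructible_alg A \<Longrightarrow> ialg A"
proof -
  assume "constructible_alg A"
  then have i: "interior_alg A" unfolding constructible_alg_def by (rule conjunct1)
  then have "boolean_alg A" unfolding interior_alg_def by (rule conjunct1)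
  then show "ialg A" using i unfolding ialg_def ialg_axioms_def balg_def by (rule conjI)
qed

lemma full_thm:
  assumes "constructible_alg A" "constructible_alg B" "frame_hom (opens A) (ia_le A) (opens B) (ia_le B) h"
  shows "\<exists>f. constructible_hom A B f \<and> (\<forall>a\<in>opens A. f a = h a)"
proof -
  have iA: "ialg A" by (rule constructible_ialg[OF assms(1)])
  have iB: "ialg B" by (rule constructible_ialg[OF assms(2)])
  interpret hctx A B h by (rule hctx.intro[OF iA iB]) (simp only: hctx_axioms_def assms(3))
  have ess: "essential A" using assms(1) by (simp only: constructible_alg_def)
  show ?thesis
  proof (rule exI[of _ f], intro conjI ballI)
    show "constructible_hom A B f" by (rule f_chom[OF ess])
    fix a assume "a \<in> opens A" then show "f a = h a" by (rule f_O)
  qed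
qed

lemma bh_facts:
  assumes "bool_hom A B f"
  shows "x \<in> ia_carrier A \<Longrightarrow> y \<in> ia_carrier A \<Longrightarrow> f (ia_meet A x y) = ia_meet B (f x) (f y)"
    "x \<in> ia_carrier A \<Longrightarrow> y \<in> ia_carrier A \<Longrightarrow> f (ia_join A x y) = ia_join B (f x) (f y)"
    "x \<in> ia_carrier A \<Longrightarrow> f (ia_compl A x) = ia_compl B (f x)"
    "f (ia_bot A) = ia_bot B" "f (ia_top A) = ia_top B"
  using assms unfolding bool_hom_def by simp_all

lemma faithful_thm:
  assumes "constructible_alg A" "constructible_hom A B f" "constructible_hom A B g"
    "\<forall>a\<in>opens A. f a = g a"
  shows "\<forall>a\<in>ia_carrier A. f a = g a"
proof -
  interpret A: ialg A by (rule constructible_ialg[OF assms(1)])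
  let ?E = "{a \<in> ia_carrier A. f a = g a}"
  have bf: "bool_hom A B f" "bool_hom A B g" using assms(2,3) unfolding constructible_hom_def by auto
  have "bool_closed A ?E" unfolding bool_closed_def
    using bh_facts[OF bf(1)] bh_facts[OF bf(2)] by auto
  moreover have "opens A \<subseteq> ?E" using assms(4) by (auto simp: opens_def)
  ultimately have "generated_subalg A (opens A) \<subseteq> ?E" unfolding generated_subalg_def by blast
  then show ?thesis using assms(1) unfolding constructible_alg_def essential_def by auto
qed



lemma is_lub_in: "is_lub L le S x \<Longrightarrow> x \<in> L" by (simp add: is_lub_def)
lemma is_glb_in: "is_glb L le S x \<Longrightarrow> x \<in> L" by (simp add: is_glb_def)

locale frm =
  fixes L :: "'c set" and le :: "'c \<Rightarrow> 'c \<Rightarrow> bool"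
  assumes fr: "is_frame L le"
begin

lemma po: "partial_order_on' L le" using fr unfolding is_frame_def by (rule conjunct1)
lemma refl: "x \<in> L \<Longrightarrow> le x x" using po unfolding partial_order_on'_def by blast
lemma antisym: "x \<in> L \<Longrightarrow> y \<in> L \<Longrightarrow> le x y \<Longrightarrow> le y x \<Longrightarrow> x = y"
  using po unfolding partial_order_on'_def by blast
lemma trans: "x \<in> L \<Longrightarrow> y \<in> L \<Longrightarrow> z \<in> L \<Longrightarrow> le x y \<Longrightarrow> le y z \<Longrightarrow> le x z"
  using po unfolding partial_order_on'_def by blast
lemma lub_ex0: "\<forall>S\<subseteq>L. \<exists>x. is_lub L le S x"
  using fr unfolding is_frame_def by (elim conjE)
lemma glb_ex0: "\<forall>S\<subseteq>L. finite S \<longrightarrow> (\<exists>x. is_glb L le S x)"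
  using fr unfolding is_frame_def by (elim conjE)
lemma lub_ex: "S \<subseteq> L \<Longrightarrow> \<exists>x. is_lub L le S x" using lub_ex0 by simp
lemma glb_ex: "S \<subseteq> L \<Longrightarrow> finite S \<Longrightarrow> \<exists>x. is_glb L le S x" using glb_ex0 by simp
lemma dist: "a \<in> L \<Longrightarrow> S \<subseteq> L \<Longrightarrow> is_lub L le S x \<Longrightarrow> is_glb L le {a, x} y \<Longrightarrow>
        is_lub L le {z. \<exists>s\<in>S. is_glb L le {a, s} z} y"
proof -
  assume a: "a \<in> L" "S \<subseteq> L" "is_lub L le S x" "is_glb L le {a, x} y"
  have "\<forall>a\<in>L. \<forall>S\<subseteq>L. \<forall>x y. is_lub L le S x \<longrightarrow> is_glb L le {a, x} y \<longrightarrow>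
        is_lub L le {z. \<exists>s\<in>S. is_glb L le {a, s} z} y"
    using fr unfolding is_frame_def by (elim conjE)
  then show ?thesis using a by blast
qed

lemma lub_unique: "is_lub L le S x \<Longrightarrow> is_lub L le S y \<Longrightarrow> x = y"
  unfolding is_lub_def using antisym by blast
lemma glb_unique: "is_glb L le S x \<Longrightarrow> is_glb L le S y \<Longrightarrow> x = y"
  unfolding is_glb_def using antisym by blast

definition lub :: "'c set \<Rightarrow> 'c" where "lub S = (SOME x. is_lub L le S x)"
definition glb :: "'c set \<Rightarrow> 'c" where "glb S = (SOME x. is_glb L le S x)"

lemma lub_is: "S \<subseteq> L \<Longrightarrow> is_lub L le S (lub S)"
  unfolding lub_def using lub_ex by (rule someI_ex)
lemma glb_is: "S \<subseteq> L \<Longrightarrow> finite S \<Longrightarrow> is_glb L le S (glb S)"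
  unfolding glb_def using glb_ex by (rule someI_ex)
lemma lub_eq: "is_lub L le S x \<Longrightarrow> lub S = x"
  unfolding lub_def by (rule some_equality) (auto intro: lub_unique)
lemma glb_eq: "is_glb L le S x \<Longrightarrow> glb S = x"
  unfolding glb_def by (rule some_equality) (auto intro: glb_unique)

definition meet where "meet u v = glb {u, v}"
definition join where "join u v = lub {u, v}"
definition top where "top = glb {}"
definition bot where "bot = lub {}"

lemma meet_is: "u \<in> L \<Longrightarrow> v \<in> L \<Longrightarrow> is_glb L le {u, v} (meet u v)"
  unfolding meet_def by (rule glb_is) auto
lemma join_is: "u \<in> L \<Longrightarrow> v \<in> L \<Longrightarrow> is_lub L le {u, v} (join u v)"
  unfolding join_def by (rule lub_is) auto

lemma meet_in[simp]: "u \<in> L \<Longrightarrow> v \<in> L \<Longrightarrow> meet u v \<in> L" using meet_is is_glb_in by metis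
lemma join_in[simp]: "u \<in> L \<Longrightarrow> v \<in> L \<Longrightarrow> join u v \<in> L" using join_is is_lub_in by metis
lemma meet_le1: "u \<in> L \<Longrightarrow> v \<in> L \<Longrightarrow> le (meet u v) u" using meet_is unfolding is_glb_def by blast
lemma meet_le2: "u \<in> L \<Longrightarrow> v \<in> L \<Longrightarrow> le (meet u v) v" using meet_is unfolding is_glb_def by blast
lemma meet_gr: "u \<in> L \<Longrightarrow> v \<in> L \<Longrightarrow> z \<in> L \<Longrightarrow> le z u \<Longrightarrow> le z v \<Longrightarrow> le z (meet u v)"
  using meet_is[of u v] unfolding is_glb_def by blast
lemma join_ge1: "u \<in> L \<Longrightarrow> v \<in> L \<Longrightarrow> le u (join u v)" using join_is unfolding is_lub_def by blast
lemma join_ge2: "u \<in> L \<Longrightarrow> v \<in> L \<Longrightarrow> le v (join u v)" using join_is unfolding is_lub_def by blast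
lemma join_le: "u \<in> L \<Longrightarrow> v \<in> L \<Longrightarrow> z \<in> L \<Longrightarrow> le u z \<Longrightarrow> le v z \<Longrightarrow> le (join u v) z"
  using join_is[of u v] unfolding is_lub_def by blast

lemma top_is: "is_glb L le {} top" unfolding top_def by (rule glb_is) auto
lemma bot_is: "is_lub L le {} bot" unfolding bot_def by (rule lub_is) auto
lemma top_in[simp]: "top \<in> L" using top_is is_glb_in by metis
lemma bot_in[simp]: "bot \<in> L" using bot_is is_lub_in by metis
lemma le_top: "x \<in> L \<Longrightarrow> le x top" using top_is unfolding is_glb_def by blast
lemma bot_le: "x \<in> L \<Longrightarrow> le bot x" using bot_is unfolding is_lub_def by blast

lemma glb_pair_eq: "u \<in> L \<Longrightarrow> v \<in> L \<Longrightarrow> is_glb L le {u, v} z \<longleftrightarrow> z = meet u v"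
  using meet_is glb_unique by blast

lemma meet_comm: "u \<in> L \<Longrightarrow> v \<in> L \<Longrightarrow> meet u v = meet v u"
  unfolding meet_def by (simp add: insert_commute)

lemma meet_mono: "u \<in> L \<Longrightarrow> v \<in> L \<Longrightarrow> u' \<in> L \<Longrightarrow> le u u' \<Longrightarrow> le (meet u v) (meet u' v)"
  by (meson meet_gr meet_in meet_le1 meet_le2 trans)

lemma distrib_max:
  assumes S: "S \<subseteq> L" and p: "p \<in> L" and q: "q \<in> L" and hS: "\<forall>s\<in>S. le (meet s p) q"
  shows "le (meet (lub S) p) q"
proof -
  have l: "is_lub L le S (lub S)" using S by (rule lub_is)
  have li: "lub S \<in> L" using l by (rule is_lub_in)
  have "is_lub L le {z. \<exists>s\<in>S. is_glb L le {p, s} z} (meet p (lub S))"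
    using dist[OF p S l meet_is[OF p li]] .
  moreover have "{z. \<exists>s\<in>S. is_glb L le {p, s} z} = (\<lambda>s. meet p s) ` S"
    using S p glb_pair_eq by blast
  ultimately have "is_lub L le ((\<lambda>s. meet p s) ` S) (meet p (lub S))" by simp
  moreover have "\<forall>s\<in>S. le (meet p s) q" using hS S p meet_comm by (metis subsetD)
  ultimately have "le (meet p (lub S)) q" using q unfolding is_lub_def by blast
  then show ?thesis using meet_comm[OF li p] by simp
qed

lemma distrib2: "u \<in> L \<Longrightarrow> v \<in> L \<Longrightarrow> w \<in> L \<Longrightarrow> le (meet u (join v w)) (join (meet u v) (meet u w))"
proof -
  assume a: "u \<in> L" "v \<in> L" "w \<in> L"
  have S: "{v, w} \<subseteq> L" using a by auto
  have "is_lub L le {z. \<exists>s\<in>{v,w}. is_glb L le {u, s} z} (meet u (join v w))"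
    using dist[OF a(1) S join_is[OF a(2,3)] meet_is[OF a(1) join_in[OF a(2,3)]]] .
  moreover have "{z. \<exists>s\<in>{v,w}. is_glb L le {u, s} z} = {meet u v, meet u w}"
    using a glb_pair_eq by auto
  ultimately have "is_lub L le {meet u v, meet u w} (meet u (join v w))" by simp
  then have "meet u (join v w) = join (meet u v) (meet u w)"
    using join_is[of "meet u v" "meet u w"] a lub_unique by simp
  then show ?thesis using a refl by simp
qed

definition pf :: "'c set \<Rightarrow> bool" where
  "pf P \<longleftrightarrow> P \<subseteq> L \<and> top \<in> P \<and> bot \<notin> P \<and> (\<forall>x\<in>P. \<forall>y\<in>L. le x y \<longrightarrow> y \<in> P) \<and>
     (\<forall>x\<in>P. \<forall>y\<in>P. meet x y \<in> P) \<and> (\<forall>x\<in>L. \<forall>y\<in>L. join x y \<in> P \<longrightarrow> x \<in> P \<or> y \<in> P)"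

definition X :: "'c set set" where "X = {P. pf P}"
definition phi :: "'c \<Rightarrow> 'c set set" where "phi u = {P \<in> X. u \<in> P}"

lemma pf_parts1: "P \<in> X \<Longrightarrow> P \<subseteq> L"
  unfolding X_def pf_def mem_Collect_eq by (elim conjE) assumption
lemma pf_parts2: "P \<in> X \<Longrightarrow> top \<in> P"
  unfolding X_def pf_def mem_Collect_eq by (elim conjE) assumption
lemma pf_parts3: "P \<in> X \<Longrightarrow> bot \<notin> P"
  unfolding X_def pf_def mem_Collect_eq by (elim conjE) assumption
lemma pf_parts4: "P \<in> X \<Longrightarrow> \<forall>x\<in>P. \<forall>y\<in>L. le x y \<longrightarrow> y \<in> P"
  unfolding X_def pf_def mem_Collect_eq by (elim conjE) assumption
lemma pf_parts5: "P \<in> X \<Longrightarrow> \<forall>x\<in>P. \<forall>y\<in>P. meet x y \<in> P"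
  unfolding X_def pf_def mem_Collect_eq by (elim conjE) assumption
lemma pf_parts6: "P \<in> X \<Longrightarrow> \<forall>x\<in>L. \<forall>y\<in>L. join x y \<in> P \<longrightarrow> x \<in> P \<or> y \<in> P"
  unfolding X_def pf_def mem_Collect_eq by (elim conjE) assumption
lemmas pf_parts = pf_parts1 pf_parts2 pf_parts3 pf_parts4 pf_parts5 pf_parts6
lemmas pf_sub = pf_parts1
lemmas pf_top = pf_parts2
lemmas pf_bot = pf_parts3
lemma pf_up: "P \<in> X \<Longrightarrow> x \<in> P \<Longrightarrow> y \<in> L \<Longrightarrow> le x y \<Longrightarrow> y \<in> P"
  using pf_parts4 by blast
lemma pf_meet: "P \<in> X \<Longrightarrow> u \<in> L \<Longrightarrow> v \<in> L \<Longrightarrow> meet u v \<in> P \<longleftrightarrow> u \<in> P \<and> v \<in> P"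
proof -
  assume a: "P \<in> X" "u \<in> L" "v \<in> L"
  have c: "\<forall>x\<in>P. \<forall>y\<in>P. meet x y \<in> P" using a(1) by (rule pf_parts5)
  show ?thesis
  proof
    assume m: "meet u v \<in> P"
    show "u \<in> P \<and> v \<in> P"
      using pf_up[OF a(1) m a(2) meet_le1[OF a(2,3)]] pf_up[OF a(1) m a(3) meet_le2[OF a(2,3)]] by (rule conjI)
  next
    assume "u \<in> P \<and> v \<in> P"
    then show "meet u v \<in> P" using c by blast
  qed
qed
lemma pf_join: "P \<in> X \<Longrightarrow> u \<in> L \<Longrightarrow> v \<in> L \<Longrightarrow> join u v \<in> P \<longleftrightarrow> u \<in> P \<or> v \<in> P"
proof -
  assume a: "P \<in> X" "u \<in> L" "v \<in> L"
  have c: "\<forall>x\<in>L. \<forall>y\<in>L. join x y \<in> P \<longrightarrow> x \<in> P \<or> y \<in> P" using a(1) by (rule pf_parts6)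
  show ?thesis
  proof
    assume m: "join u v \<in> P"
    then show "u \<in> P \<or> v \<in> P" using c a by blast
  next
    assume "u \<in> P \<or> v \<in> P"
    then show "join u v \<in> P"
    proof
      assume "u \<in> P" then show ?thesis using pf_up[OF a(1) _ join_in[OF a(2,3)] join_ge1[OF a(2,3)]] by blast
    next
      assume "v \<in> P" then show ?thesis using pf_up[OF a(1) _ join_in[OF a(2,3)] join_ge2[OF a(2,3)]] by blast
    qed
  qed
qed

lemma pft:
  assumes u: "u \<in> L" and v: "v \<in> L" and nle: "\<not> le u v"
  shows "\<exists>P\<in>X. u \<in> P \<and> v \<notin> P"
proof -
  define FF where "FF = {F. F \<subseteq> L \<and> u \<in> F \<and> v \<notin> F \<and> (\<forall>x\<in>F. \<forall>y\<in>L. le x y \<longrightarrow> y \<in> F) \<and>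
     (\<forall>x\<in>F. \<forall>y\<in>F. meet x y \<in> F)}"
  define U0 where "U0 = {x \<in> L. le u x}"
  have U0: "U0 \<in> FF"
    unfolding FF_def U0_def using u v nle refl
    by (auto intro: trans meet_gr)
  have ch: "\<forall>C\<in>chains FF. \<exists>U\<in>FF. \<forall>X\<in>C. X \<subseteq> U"
  proof
    fix C assume C: "C \<in> chains FF"
    show "\<exists>U\<in>FF. \<forall>X\<in>C. X \<subseteq> U"
    proof (cases "C = {}")
      case True then show ?thesis using U0 by blast
    next
      case False
      have sub: "C \<subseteq> FF" and chn: "\<forall>A\<in>C. \<forall>B\<in>C. A \<subseteq> B \<or> B \<subseteq> A"
        using C unfolding chains_def chain_subset_def by auto
      have "\<Union>C \<in> FF"
      proof -
        have m: "\<forall>x\<in>\<Union>C. \<forall>y\<in>\<Union>C. meet x y \<in> \<Union>C"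
        proof (intro ballI)
          fix x y assume "x \<in> \<Union>C" "y \<in> \<Union>C"
          then obtain A B where AB: "A \<in> C" "B \<in> C" "x \<in> A" "y \<in> B" by blast
          show "meet x y \<in> \<Union>C"
          proof (cases "A \<subseteq> B")
            case True
            then have "meet x y \<in> B" using AB sub unfolding FF_def by blast
            then show ?thesis using AB by blast
          next
            case False
            then have "B \<subseteq> A" using chn AB by blast
            then have "meet x y \<in> A" using AB sub unfolding FF_def by blast
            then show ?thesis using AB by blast
          qed
        qed
        show ?thesis using m False sub unfolding FF_def by blast
      qed
      then show ?thesis by blast
    qed
  qed
  obtain M where M: "M \<in> FF" and mx: "\<forall>G\<in>FF. M \<subseteq> G \<longrightarrow> G = M"
    using Zorn_Lemma2[OF ch] by blast
  have MsubL: "M \<subseteq> L" and uM: "u \<in> M" and vM: "v \<notin> M"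
    and upM: "\<forall>x\<in>M. \<forall>y\<in>L. le x y \<longrightarrow> y \<in> M" and mM: "\<forall>x\<in>M. \<forall>y\<in>M. meet x y \<in> M"
    using M unfolding FF_def by auto
  have key: "\<exists>m\<in>M. le (meet m x) v" if x: "x \<in> L" "x \<notin> M" for x
  proof (rule ccontr)
    assume nv: "\<not> (\<exists>m\<in>M. le (meet m x) v)"
    define G where "G = {z \<in> L. \<exists>m\<in>M. le (meet m x) z}"
    have "G \<in> FF"
    proof -
      have "G \<subseteq> L" unfolding G_def by blast
      moreover have "u \<in> G" unfolding G_def using uM u x meet_le1 by blast
      moreover have "v \<notin> G" unfolding G_def using nv by blast
      moreover have "\<forall>a\<in>G. \<forall>b\<in>L. le a b \<longrightarrow> b \<in> G"
      proof (intro ballI impI)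
        fix a b assume ab: "a \<in> G" "b \<in> L" "le a b"
        then obtain m where m: "m \<in> M" "a \<in> L" "le (meet m x) a" unfolding G_def by blast
        have "m \<in> L" using m MsubL by blast
        then have "le (meet m x) b" using trans[OF meet_in[OF _ x(1)] m(2) ab(2) m(3) ab(3)] by blast
        then show "b \<in> G" unfolding G_def using ab m by blast
      qed
      moreover have "\<forall>a\<in>G. \<forall>b\<in>G. meet a b \<in> G"
      proof (intro ballI)
        fix a b assume "a \<in> G" "b \<in> G"
        then obtain m1 m2 where m: "a \<in> L" "b \<in> L" "m1 \<in> M" "m2 \<in> M" "le (meet m1 x) a" "le (meet m2 x) b"
          unfolding G_def by blast
        have mi: "m1 \<in> L" "m2 \<in> L" using m MsubL by auto
        have "le (meet (meet m1 m2) x) (meet m1 x)"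
          using mi x by (intro meet_mono meet_le1) auto
        then have 1: "le (meet (meet m1 m2) x) a" using m mi x by (meson trans meet_in)
        have "le (meet (meet m1 m2) x) (meet m2 x)"
          using mi x by (intro meet_mono meet_le2) auto
        then have 2: "le (meet (meet m1 m2) x) b" using m mi x by (meson trans meet_in)
        have "le (meet (meet m1 m2) x) (meet a b)" using 1 2 m mi x by (intro meet_gr) auto
        then show "meet a b \<in> G" unfolding G_def using m mM by auto
      qed
      ultimately show ?thesis unfolding FF_def by blast
    qed
    moreover have "M \<subseteq> G"
    proof
      fix m assume "m \<in> M"
      then show "m \<in> G" unfolding G_def using MsubL x meet_le1 by blast
    qed
    ultimately have "G = M" using mx by blast
    moreover have "x \<in> G" unfolding G_def using uM u x meet_le2 by blast
    ultimately show False using x by blast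
  qed
  have prime: "\<forall>x\<in>L. \<forall>y\<in>L. join x y \<in> M \<longrightarrow> x \<in> M \<or> y \<in> M"
  proof (intro ballI impI)
    fix x y assume xy: "x \<in> L" "y \<in> L" "join x y \<in> M"
    show "x \<in> M \<or> y \<in> M"
    proof (rule ccontr)
      assume "\<not> (x \<in> M \<or> y \<in> M)"
      then obtain m1 m2 where m: "m1 \<in> M" "m2 \<in> M" "le (meet m1 x) v" "le (meet m2 y) v"
        using key xy by blast
      have mi: "m1 \<in> L" "m2 \<in> L" using m MsubL by auto
      let ?m = "meet m1 m2"
      have mm: "?m \<in> M" using mM m by blast
      have mL: "?m \<in> L" using mi by simp
      have "meet ?m (join x y) \<in> M" using mM mm xy by blast
      moreover have "le (meet ?m (join x y)) v"
      proof -
        have "le (meet ?m x) v"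
          using mi xy v m(3) by (meson meet_mono meet_le1 trans meet_in)
        moreover have "le (meet ?m y) v"
          using mi xy v m(4) by (meson meet_mono meet_le2 trans meet_in)
        ultimately have "le (join (meet ?m x) (meet ?m y)) v"
          using mL xy v by (intro join_le) auto
        then show ?thesis using distrib2[OF mL xy(1,2)] mL xy v by (meson trans join_in meet_in)
      qed
      ultimately have "v \<in> M" using upM v by blast
      then show False using vM by blast
    qed
  qed
  have "top \<in> M" using upM uM top_in le_top[OF u] by blast
  moreover have "bot \<notin> M" using upM vM v bot_le[OF v] by blast
  ultimately have "M \<in> X"
    unfolding X_def pf_def mem_Collect_eq
    using MsubL upM mM prime by (intro conjI)
  then show ?thesis using uM vM by blast
qed

lemma phi_sub: "phi u \<subseteq> X" unfolding phi_def by blast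

lemma phi_le: "u \<in> L \<Longrightarrow> v \<in> L \<Longrightarrow> phi u \<subseteq> phi v \<longleftrightarrow> le u v"
proof
  assume a: "u \<in> L" "v \<in> L" "phi u \<subseteq> phi v"
  show "le u v"
  proof (rule ccontr)
    assume "\<not> le u v"
    then obtain P where "P \<in> X" "u \<in> P" "v \<notin> P" using pft a by blast
    then show False using a unfolding phi_def by blast
  qed
next
  assume a: "u \<in> L" "v \<in> L" "le u v"
  show "phi u \<subseteq> phi v" unfolding phi_def using pf_up a by blast
qed

lemma phi_inj: "u \<in> L \<Longrightarrow> v \<in> L \<Longrightarrow> phi u = phi v \<Longrightarrow> u = v"
  using phi_le antisym by (metis order_refl)

lemma phi_meet: "u \<in> L \<Longrightarrow> v \<in> L \<Longrightarrow> phi (meet u v) = phi u \<inter> phi v"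
  unfolding phi_def using pf_meet by blast
lemma phi_top: "phi top = X" unfolding phi_def using pf_top by blast


lemma phi_join: "u \<in> L \<Longrightarrow> v \<in> L \<Longrightarrow> phi (join u v) = phi u \<union> phi v"
  unfolding phi_def using pf_join by blast

definition cnfS :: "('c \<times> 'c) list \<Rightarrow> 'c set set" where
  "cnfS F = {P \<in> X. \<forall>(p,q)\<in>set F. p \<in> P \<longrightarrow> q \<in> P}"
definition okS :: "('c \<times> 'c) list \<Rightarrow> bool" where
  "okS F \<longleftrightarrow> set F \<subseteq> L \<times> L"
definition CC :: "'c set set set" where
  "CC = {cnfS F | F. okS F}"
definition boxS :: "'c set set \<Rightarrow> 'c set set" where
  "boxS a = phi (lub {w \<in> L. phi w \<subseteq> a})"
definition AA :: "'c set set ialg" where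
  "AA = \<lparr>ia_carrier = CC, ia_meet = (\<inter>), ia_join = (\<union>), ia_compl = (\<lambda>a. X - a),
         ia_bot = {}, ia_top = X, ia_box = boxS\<rparr>"

lemma AA_simps[simp]: "ia_carrier AA = CC" "ia_meet AA = (\<inter>)" "ia_join AA = (\<union>)"
  "ia_compl AA = (\<lambda>a. X - a)" "ia_bot AA = {}" "ia_top AA = X" "ia_box AA = boxS"
  by (simp_all add: AA_def)

lemma AA_le: "ia_le AA a b \<longleftrightarrow> a \<subseteq> b" by (auto simp: ia_le_def)

lemma okS_simps[simp]: "okS []" "okS ((p,q)#F) \<longleftrightarrow> p \<in> L \<and> q \<in> L \<and> okS F"
  "okS (F @ G) \<longleftrightarrow> okS F \<and> okS G"
  by (auto simp: okS_def)

lemma cnfS_sub: "cnfS F \<subseteq> X" unfolding cnfS_def by blast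
lemma CC_sub: "a \<in> CC \<Longrightarrow> a \<subseteq> X" unfolding CC_def using cnfS_sub by blast
lemma cnfS_Nil: "cnfS [] = X" unfolding cnfS_def by simp
lemma cnfS_Cons: "cnfS ((p,q)#F) = ((X - phi p) \<union> phi q) \<inter> cnfS F"
  unfolding cnfS_def phi_def by auto
lemma cnfS_append: "cnfS (F @ G) = cnfS F \<inter> cnfS G"
  unfolding cnfS_def by auto
lemma phi_cnfS: "phi x = cnfS [(top, x)]"
  unfolding cnfS_def phi_def using pf_top by auto
lemma bot_cnfS: "{} = cnfS [(top, bot)]"
  unfolding cnfS_def using pf_top pf_bot by auto

lemma CC_I: "okS F \<Longrightarrow> cnfS F \<in> CC" unfolding CC_def by blast
lemma CC_E: "a \<in> CC \<Longrightarrow> (\<And>F. okS F \<Longrightarrow> a = cnfS F \<Longrightarrow> thesis) \<Longrightarrow> thesis"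
  unfolding CC_def by blast

lemma phi_CC: "x \<in> L \<Longrightarrow> phi x \<in> CC" using phi_cnfS CC_I by simp
lemma X_CC: "X \<in> CC" using cnfS_Nil CC_I[of "[]"] by simp
lemma empty_CC: "{} \<in> CC" using bot_cnfS CC_I[of "[(top,bot)]"] by simp
lemma int_CC: "a \<in> CC \<Longrightarrow> b \<in> CC \<Longrightarrow> a \<inter> b \<in> CC"
  by (metis CC_E CC_I cnfS_append okS_simps(3))

definition prodS :: "('c \<times> 'c) list \<Rightarrow> ('c \<times> 'c) list \<Rightarrow> ('c \<times> 'c) list" where
  "prodS F G = concat (map (\<lambda>(p,q). map (\<lambda>(p',q'). (meet p p', join q q')) G) F)"

lemma set_prodS: "set (prodS F G) = (\<lambda>((p,q),(p',q')). (meet p p', join q q')) ` (set F \<times> set G)"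
  unfolding prodS_def by force

lemma okS_prodS: "okS F \<Longrightarrow> okS G \<Longrightarrow> okS (prodS F G)"
  unfolding okS_def set_prodS by (auto intro!: meet_in join_in)

lemma un_cnfS: assumes "okS F" "okS G" shows "cnfS F \<union> cnfS G = cnfS (prodS F G)"
proof
  show "cnfS F \<union> cnfS G \<subseteq> cnfS (prodS F G)"
  proof
    fix P assume P: "P \<in> cnfS F \<union> cnfS G"
    then have PX: "P \<in> X" using cnfS_sub by blast
    show "P \<in> cnfS (prodS F G)"
      unfolding cnfS_def set_prodS
    proof (intro CollectI conjI PX ballI impI)
      fix z assume "z \<in> (\<lambda>((p,q),(p',q')). (meet p p', join q q')) ` (set F \<times> set G)"
      then obtain p q p' q' where z: "z = (meet p p', join q q')" "(p,q) \<in> set F" "(p',q') \<in> set G"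
        by auto
      have L: "p \<in> L" "q \<in> L" "p' \<in> L" "q' \<in> L" using z assms unfolding okS_def by auto
      show "case z of (a, b) \<Rightarrow> a \<in> P \<longrightarrow> b \<in> P"
        using P z L pf_meet[OF PX] pf_join[OF PX] unfolding cnfS_def by auto
    qed
  qed
next
  show "cnfS (prodS F G) \<subseteq> cnfS F \<union> cnfS G"
  proof
    fix P assume P: "P \<in> cnfS (prodS F G)"
    then have PX: "P \<in> X" using cnfS_sub by blast
    have h: "\<forall>p q p' q'. (p,q) \<in> set F \<longrightarrow> (p',q') \<in> set G \<longrightarrow> p \<in> P \<and> p' \<in> P \<longrightarrow> q \<in> P \<or> q' \<in> P"
    proof (intro allI impI)
      fix p q p' q' assume ab: "(p,q) \<in> set F" "(p',q') \<in> set G" and pp: "p \<in> P \<and> p' \<in> P"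
      have L: "p \<in> L" "q \<in> L" "p' \<in> L" "q' \<in> L" using ab assms unfolding okS_def by auto
      have "(meet p p', join q q') \<in> set (prodS F G)" unfolding set_prodS using ab by force
      then have "meet p p' \<in> P \<longrightarrow> join q q' \<in> P" using P unfolding cnfS_def by auto
      then show "q \<in> P \<or> q' \<in> P"
        using pp L pf_meet[OF PX] pf_join[OF PX] by simp
    qed
    show "P \<in> cnfS F \<union> cnfS G"
    proof (rule ccontr)
      assume "P \<notin> cnfS F \<union> cnfS G"
      then obtain p q p' q' where "(p,q) \<in> set F" "p \<in> P" "q \<notin> P" "(p',q') \<in> set G" "p' \<in> P" "q' \<notin> P"
        using PX unfolding cnfS_def by auto
      then show False using h by blast
    qed
  qed
qed

lemma un_CC: "a \<in> CC \<Longrightarrow> b \<in> CC \<Longrightarrow> a \<union> b \<in> CC"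
  by (metis CC_E CC_I un_cnfS okS_prodS)

lemma compl_CC: "okS F \<Longrightarrow> X - cnfS F \<in> CC"
proof (induction F)
  case Nil then show ?case using cnfS_Nil empty_CC by simp
next
  case (Cons a F)
  obtain p q where a: "a = (p,q)" by force
  have L: "p \<in> L" "q \<in> L" "okS F" using Cons a by auto
  have "X - cnfS (a#F) = (phi p \<inter> (X - phi q)) \<union> (X - cnfS F)"
    unfolding a cnfS_Cons using phi_sub by blast
  moreover have "phi p \<inter> (X - phi q) = cnfS [(top,p),(q,bot)]"
    unfolding cnfS_def phi_def using pf_top pf_bot by auto
  moreover have "cnfS [(top,p),(q,bot)] \<in> CC" using L by (intro CC_I) simp
  ultimately show ?case using Cons L un_CC by simp
qed

lemma compl_CC': "a \<in> CC \<Longrightarrow> X - a \<in> CC" by (metis CC_E compl_CC)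

lemma closed_CC: "bool_closed AA CC"
  unfolding bool_closed_def AA_simps using empty_CC X_CC int_CC un_CC compl_CC' by blast

lemma gen_CC: "generated_subalg AA (phi ` L) = CC"
proof
  show "generated_subalg AA (phi ` L) \<subseteq> CC"
    unfolding generated_subalg_def AA_simps using closed_CC phi_CC by blast
next
  show "CC \<subseteq> generated_subalg AA (phi ` L)"
  proof
    fix a assume "a \<in> CC"
    then obtain F where F: "okS F" "a = cnfS F" by (rule CC_E)
    have "cnfS F \<in> S" if S: "phi ` L \<subseteq> S" "bool_closed AA S" for S
      using F(1)
    proof (induction F)
      case Nil then show ?case using S(2) cnfS_Nil unfolding bool_closed_def by simp
    next
      case (Cons b F)
      obtain p q where b: "b = (p,q)" by force
      have L: "p \<in> L" "q \<in> L" "okS F" using Cons b by auto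
      have "phi p \<in> S" "phi q \<in> S" using S L by auto
      then have "(X - phi p) \<union> phi q \<in> S" using S(2) unfolding bool_closed_def by simp
      then show ?case unfolding b cnfS_Cons using Cons L S(2) unfolding bool_closed_def by simp
    qed
    then show "a \<in> generated_subalg AA (phi ` L)" unfolding generated_subalg_def F(2) by blast
  qed
qed

lemma phi_sub_cnfS: assumes "w \<in> L" "okS F"
  shows "phi w \<subseteq> cnfS F \<longleftrightarrow> (\<forall>(p,q)\<in>set F. le (meet w p) q)"
proof
  assume h: "phi w \<subseteq> cnfS F"
  show "\<forall>(p,q)\<in>set F. le (meet w p) q"
  proof (intro ballI)
    fix z assume z: "z \<in> set F"
    obtain p q where pq: "z = (p,q)" by force
    have L: "p \<in> L" "q \<in> L" using z pq assms unfolding okS_def by auto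
    have "phi (meet w p) \<subseteq> phi q"
    proof
      fix P assume "P \<in> phi (meet w p)"
      then have P: "P \<in> X" "w \<in> P" "p \<in> P" using pf_meet assms L unfolding phi_def by auto
      then have "P \<in> cnfS F" using h unfolding phi_def by blast
      then show "P \<in> phi q" using P z pq unfolding cnfS_def phi_def by auto
    qed
    then show "case z of (p,q) \<Rightarrow> le (meet w p) q" using phi_le L assms pq by simp
  qed
next
  assume h: "\<forall>(p,q)\<in>set F. le (meet w p) q"
  show "phi w \<subseteq> cnfS F"
  proof
    fix P assume P: "P \<in> phi w"
    then have PX: "P \<in> X" and wP: "w \<in> P" unfolding phi_def by auto
    have "\<forall>(p,q)\<in>set F. p \<in> P \<longrightarrow> q \<in> P"
    proof (intro ballI)
      fix z assume z: "z \<in> set F"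
      obtain p q where pq: "z = (p,q)" by force
      have L: "p \<in> L" "q \<in> L" using z pq assms unfolding okS_def by auto
      have "p \<in> P \<longrightarrow> q \<in> P"
      proof
        assume "p \<in> P"
        then have "meet w p \<in> P" using pf_meet[OF PX] wP L assms by simp
        moreover have "le (meet w p) q" using h z pq by auto
        ultimately show "q \<in> P" using pf_up[OF PX] L assms by simp
      qed
      then show "case z of (p,q) \<Rightarrow> p \<in> P \<longrightarrow> q \<in> P" using pq by simp
    qed
    then show "P \<in> cnfS F" unfolding cnfS_def using PX by blast
  qed
qed

lemma box_eq: assumes "x \<in> L" "phi x \<subseteq> a" "\<forall>w\<in>L. phi w \<subseteq> a \<longrightarrow> le w x"
  shows "boxS a = phi x"
proof -
  have "is_lub L le {w \<in> L. phi w \<subseteq> a} x"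
    unfolding is_lub_def using assms by blast
  then show ?thesis unfolding boxS_def by (simp add: lub_eq)
qed

lemma box_cnfS: assumes "okS F"
  shows "\<exists>x\<in>L. boxS (cnfS F) = phi x \<and> phi x \<subseteq> cnfS F \<and> (\<forall>w\<in>L. phi w \<subseteq> cnfS F \<longrightarrow> le w x)"
proof -
  let ?S = "{w \<in> L. phi w \<subseteq> cnfS F}"
  have S: "?S \<subseteq> L" by blast
  have l: "is_lub L le ?S (lub ?S)" using S by (rule lub_is)
  have xL: "lub ?S \<in> L" using l by (rule is_lub_in)
  have "\<forall>(p,q)\<in>set F. le (meet (lub ?S) p) q"
  proof (intro ballI)
    fix z assume z: "z \<in> set F"
    obtain p q where pq: "z = (p,q)" by force
    have L: "p \<in> L" "q \<in> L" using z pq assms unfolding okS_def by auto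
    have "\<forall>s\<in>?S. le (meet s p) q" using phi_sub_cnfS assms z pq by auto
    then have "le (meet (lub ?S) p) q" using distrib_max[OF S L] by blast
    then show "case z of (p,q) \<Rightarrow> le (meet (lub ?S) p) q" using pq by simp
  qed
  then have "phi (lub ?S) \<subseteq> cnfS F" using phi_sub_cnfS[OF xL assms] by blast
  moreover have "\<forall>w\<in>L. phi w \<subseteq> cnfS F \<longrightarrow> le w (lub ?S)" using l unfolding is_lub_def by blast
  ultimately show ?thesis using xL box_eq by blast
qed

lemma box_CC: assumes "a \<in> CC"
  obtains x where "x \<in> L" "boxS a = phi x" "phi x \<subseteq> a" "\<forall>w\<in>L. phi w \<subseteq> a \<longrightarrow> le w x"
  using assms
proof (rule CC_E)
  fix F assume F: "okS F" "a = cnfS F"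
  obtain x where "x \<in> L" "boxS (cnfS F) = phi x" "phi x \<subseteq> cnfS F" "\<forall>w\<in>L. phi w \<subseteq> cnfS F \<longrightarrow> le w x"
    using box_cnfS[OF F(1)] by blast
  then show thesis using that F(2) by blast
qed

lemma box_phi: assumes "x \<in> L" shows "boxS (phi x) = phi x"
proof (rule box_eq[OF assms])
  show "phi x \<subseteq> phi x" by (rule order_refl)
  show "\<forall>w\<in>L. phi w \<subseteq> phi x \<longrightarrow> le w x"
  proof (intro ballI impI)
    fix w assume "w \<in> L" "phi w \<subseteq> phi x"
    then show "le w x" using phi_le[OF _ assms, of w] by simp
  qed
qed

lemma AA_ba: "boolean_alg AA"
  unfolding boolean_alg_def Let_def AA_simps
  apply (intro conjI ballI)
  apply (simp_all add: empty_CC X_CC int_CC un_CC compl_CC' Int_assoc Un_assoc Int_commute Un_commute)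
  apply (auto dest: CC_sub)
  done

lemma AA_ia: "interior_alg AA"
proof -
  have 1: "\<forall>a\<in>CC. boxS a \<in> CC"
  proof
    fix a assume "a \<in> CC" then obtain x where "x \<in> L" "boxS a = phi x" by (rule box_CC)
    then show "boxS a \<in> CC" using phi_CC by simp
  qed
  have 2: "boxS X = X" using box_eq[of top X] phi_top le_top by simp
  have 3: "\<forall>a\<in>CC. \<forall>b\<in>CC. boxS (a \<inter> b) = boxS a \<inter> boxS b"
  proof (intro ballI)
    fix a b assume ab: "a \<in> CC" "b \<in> CC"
    obtain x where x: "x \<in> L" "boxS a = phi x" "phi x \<subseteq> a" "\<forall>w\<in>L. phi w \<subseteq> a \<longrightarrow> le w x"
      using ab(1) by (rule box_CC)
    obtain y where y: "y \<in> L" "boxS b = phi y" "phi y \<subseteq> b" "\<forall>w\<in>L. phi w \<subseteq> b \<longrightarrow> le w y"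
      using ab(2) by (rule box_CC)
    have "boxS (a \<inter> b) = phi (meet x y)"
    proof (rule box_eq)
      show "meet x y \<in> L" using x y by simp
      show "phi (meet x y) \<subseteq> a \<inter> b" using x y phi_meet by auto
      show "\<forall>w\<in>L. phi w \<subseteq> a \<inter> b \<longrightarrow> le w (meet x y)"
        using x y meet_gr by auto
    qed
    then show "boxS (a \<inter> b) = boxS a \<inter> boxS b" using x y phi_meet by simp
  qed
  have 4: "\<forall>a\<in>CC. boxS a \<subseteq> a"
  proof
    fix a assume "a \<in> CC" then obtain x where "boxS a = phi x" "phi x \<subseteq> a" by (rule box_CC)
    then show "boxS a \<subseteq> a" by simp
  qed
  have 5: "\<forall>a\<in>CC. boxS a \<subseteq> boxS (boxS a)"
  proof
    fix a assume "a \<in> CC" then obtain x where "x \<in> L" "boxS a = phi x" by (rule box_CC)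
    then show "boxS a \<subseteq> boxS (boxS a)" using box_phi by simp
  qed
  show ?thesis unfolding interior_alg_def AA_simps AA_le
    using AA_ba 1 2 3 4 5 by (intro conjI)
qed

lemma opens_AA: "opens AA = phi ` L"
proof
  show "opens AA \<subseteq> phi ` L"
  proof
    fix a assume "a \<in> opens AA"
    then have a: "a \<in> CC" "boxS a = a" unfolding opens_def by auto
    obtain x where "x \<in> L" "boxS a = phi x" "phi x \<subseteq> a" "\<forall>w\<in>L. phi w \<subseteq> a \<longrightarrow> le w x"
      using a(1) by (rule box_CC)
    then show "a \<in> phi ` L" using a by auto
  qed
next
  show "phi ` L \<subseteq> opens AA" unfolding opens_def using phi_CC box_phi by auto
qed

end



locale oiso =
  fixes L :: "'a set" and le :: "'a \<Rightarrow> 'a \<Rightarrow> bool" and M :: "'b set" and le' :: "'b \<Rightarrow> 'b \<Rightarrow> bool"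
    and g :: "'a \<Rightarrow> 'b" and k :: "'b \<Rightarrow> 'a"
  assumes g: "\<And>x. x \<in> L \<Longrightarrow> g x \<in> M" and k: "\<And>y. y \<in> M \<Longrightarrow> k y \<in> L"
    and kg: "\<And>x. x \<in> L \<Longrightarrow> k (g x) = x" and gk: "\<And>y. y \<in> M \<Longrightarrow> g (k y) = y"
    and ord: "\<And>x y. x \<in> L \<Longrightarrow> y \<in> L \<Longrightarrow> le' (g x) (g y) \<longleftrightarrow> le x y"
begin

lemma ord': "a \<in> M \<Longrightarrow> b \<in> M \<Longrightarrow> le (k a) (k b) \<longleftrightarrow> le' a b"
  using ord[OF k k] gk by metis

lemma lub_g: assumes S: "S \<subseteq> L" and x: "x \<in> L"
  shows "is_lub M le' (g ` S) (g x) \<longleftrightarrow> is_lub L le S x"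
proof
  assume h: "is_lub M le' (g ` S) (g x)"
  have ub: "\<forall>s\<in>S. le s x"
  proof
    fix s assume s: "s \<in> S"
    then have "le' (g s) (g x)" using h unfolding is_lub_def by blast
    then show "le s x" using ord s S x by blast
  qed
  have least: "\<forall>y\<in>L. (\<forall>s\<in>S. le s y) \<longrightarrow> le x y"
  proof (intro ballI impI)
    fix y assume y: "y \<in> L" and hy: "\<forall>s\<in>S. le s y"
    have "\<forall>t\<in>g ` S. le' t (g y)"
    proof
      fix t assume "t \<in> g ` S"
      then obtain s where "s \<in> S" "t = g s" by blast
      then show "le' t (g y)" using hy ord S y by blast
    qed
    moreover have "g y \<in> M" using g y .
    ultimately have "le' (g x) (g y)" using h unfolding is_lub_def by blast
    then show "le x y" using ord x y by blast
  qed
  show "is_lub L le S x" unfolding is_lub_def using x ub least by blast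
next
  assume h: "is_lub L le S x"
  have ub: "\<forall>t\<in>g ` S. le' t (g x)"
  proof
    fix t assume "t \<in> g ` S"
    then obtain s where s: "s \<in> S" "t = g s" by blast
    then have "le s x" using h unfolding is_lub_def by blast
    then show "le' t (g x)" using s ord S x by blast
  qed
  have least: "\<forall>y\<in>M. (\<forall>t\<in>g ` S. le' t y) \<longrightarrow> le' (g x) y"
  proof (intro ballI impI)
    fix y assume y: "y \<in> M" and hy: "\<forall>t\<in>g ` S. le' t y"
    have "\<forall>s\<in>S. le s (k y)"
    proof
      fix s assume s: "s \<in> S"
      then have "le' (g s) (g (k y))" using hy gk[OF y] by simp
      then show "le s (k y)" using ord s S k[OF y] by blast
    qed
    then have "le x (k y)" using h k[OF y] unfolding is_lub_def by blast
    then show "le' (g x) y" using ord[OF x k[OF y]] gk[OF y] by simp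
  qed
  show "is_lub M le' (g ` S) (g x)" unfolding is_lub_def using g[OF x] ub least by blast
qed

lemma glb_g: assumes S: "S \<subseteq> L" and x: "x \<in> L"
  shows "is_glb M le' (g ` S) (g x) \<longleftrightarrow> is_glb L le S x"
proof
  assume h: "is_glb M le' (g ` S) (g x)"
  have ub: "\<forall>s\<in>S. le x s"
  proof
    fix s assume s: "s \<in> S"
    then have "le' (g x) (g s)" using h unfolding is_glb_def by blast
    then show "le x s" using ord s S x by blast
  qed
  have least: "\<forall>y\<in>L. (\<forall>s\<in>S. le y s) \<longrightarrow> le y x"
  proof (intro ballI impI)
    fix y assume y: "y \<in> L" and hy: "\<forall>s\<in>S. le y s"
    have "\<forall>t\<in>g ` S. le' (g y) t"
    proof
      fix t assume "t \<in> g ` S"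
      then obtain s where "s \<in> S" "t = g s" by blast
      then show "le' (g y) t" using hy ord S y by blast
    qed
    moreover have "g y \<in> M" using g y .
    ultimately have "le' (g y) (g x)" using h unfolding is_glb_def by blast
    then show "le y x" using ord x y by blast
  qed
  show "is_glb L le S x" unfolding is_glb_def using x ub least by blast
next
  assume h: "is_glb L le S x"
  have ub: "\<forall>t\<in>g ` S. le' (g x) t"
  proof
    fix t assume "t \<in> g ` S"
    then obtain s where s: "s \<in> S" "t = g s" by blast
    then have "le x s" using h unfolding is_glb_def by blast
    then show "le' (g x) t" using s ord S x by blast
  qed
  have least: "\<forall>y\<in>M. (\<forall>t\<in>g ` S. le' y t) \<longrightarrow> le' y (g x)"
  proof (intro ballI impI)
    fix y assume y: "y \<in> M" and hy: "\<forall>t\<in>g ` S. le' y t"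
    have "\<forall>s\<in>S. le (k y) s"
    proof
      fix s assume s: "s \<in> S"
      then have "le' (g (k y)) (g s)" using hy gk[OF y] by simp
      then show "le (k y) s" using ord s S k[OF y] by blast
    qed
    then have "le (k y) x" using h k[OF y] unfolding is_glb_def by blast
    then show "le' y (g x)" using ord[OF k[OF y] x] gk[OF y] by simp
  qed
  show "is_glb M le' (g ` S) (g x)" unfolding is_glb_def using g[OF x] ub least by blast
qed

lemma img_k: "T \<subseteq> M \<Longrightarrow> g ` (k ` T) = T"
proof -
  assume T: "T \<subseteq> M"
  have "g ` (k ` T) = (\<lambda>y. g (k y)) ` T" by (simp add: image_image)
  also have "\<dots> = T" using T gk by (simp add: subset_iff)
  finally show ?thesis .
qed

lemma kT: "T \<subseteq> M \<Longrightarrow> k ` T \<subseteq> L" using k by blast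

lemma hom_g: "frame_hom L le M le' g"
  unfolding frame_hom_def
proof (intro conjI allI impI)
  show "g ` L \<subseteq> M" using g by blast
  fix S x
  show "S \<subseteq> L \<Longrightarrow> is_lub L le S x \<Longrightarrow> is_lub M le' (g ` S) (g x)"
    using lub_g by (simp add: is_lub_def)
  show "S \<subseteq> L \<Longrightarrow> finite S \<Longrightarrow> is_glb L le S x \<Longrightarrow> is_glb M le' (g ` S) (g x)"
    using glb_g by (simp add: is_glb_def)
qed

lemma hom_k: "frame_hom M le' L le k"
  unfolding frame_hom_def
proof (intro conjI allI impI)
  show "k ` M \<subseteq> L" using k by blast
  fix T y
  assume T: "T \<subseteq> M"
  have e: "g ` (k ` T) = T" using img_k[OF T] .
  show "is_lub L le (k ` T) (k y)" if "is_lub M le' T y"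
  proof -
    have y: "y \<in> M" using that by (simp add: is_lub_def)
    have "is_lub M le' (g ` (k ` T)) (g (k y))" using that e gk[OF y] by simp
    then show ?thesis using lub_g[OF kT[OF T] k[OF y]] by simp
  qed
  show "is_glb L le (k ` T) (k y)" if "finite T" "is_glb M le' T y"
  proof -
    have y: "y \<in> M" using that by (simp add: is_glb_def)
    have "is_glb M le' (g ` (k ` T)) (g (k y))" using that e gk[OF y] by simp
    then show ?thesis using glb_g[OF kT[OF T] k[OF y]] by simp
  qed
qed

lemma frame_M: assumes fr: "is_frame L le" shows "is_frame M le'"
proof -
  have po: "partial_order_on' L le" using fr unfolding is_frame_def by (rule conjunct1)
  have lubex: "\<forall>S\<subseteq>L. \<exists>x. is_lub L le S x" using fr unfolding is_frame_def by (elim conjE)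
  have glbex: "\<forall>S\<subseteq>L. finite S \<longrightarrow> (\<exists>x. is_glb L le S x)" using fr unfolding is_frame_def by (elim conjE)
  have dist: "\<forall>a\<in>L. \<forall>S\<subseteq>L. \<forall>x y. is_lub L le S x \<longrightarrow> is_glb L le {a, x} y \<longrightarrow>
        is_lub L le {z. \<exists>s\<in>S. is_glb L le {a, s} z} y" using fr unfolding is_frame_def by (elim conjE)
  have refl: "\<forall>x\<in>L. le x x" using po unfolding partial_order_on'_def by (elim conjE)
  have anti: "\<forall>x\<in>L. \<forall>y\<in>L. le x y \<and> le y x \<longrightarrow> x = y" using po unfolding partial_order_on'_def by (elim conjE)
  have trans: "\<forall>x\<in>L. \<forall>y\<in>L. \<forall>z\<in>L. le x y \<and> le y z \<longrightarrow> le x z" using po unfolding partial_order_on'_def by (elim conjE)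
  have po': "partial_order_on' M le'"
    unfolding partial_order_on'_def
  proof (intro conjI ballI impI)
    fix x assume x: "x \<in> M"
    show "le' x x" using refl k[OF x] ord'[OF x x] by blast
  next
    fix x y assume x: "x \<in> M" and y: "y \<in> M" and h: "le' x y \<and> le' y x"
    then have "k x = k y" using anti k[OF x] k[OF y] ord'[OF x y] ord'[OF y x] by blast
    then show "x = y" using gk[OF x] gk[OF y] by metis
  next
    fix x y z assume x: "x \<in> M" and y: "y \<in> M" and z: "z \<in> M" and h: "le' x y \<and> le' y z"
    then have "le (k x) (k z)" using trans k[OF x] k[OF y] k[OF z] ord'[OF x y] ord'[OF y z] by blast
    then show "le' x z" using ord'[OF x z] by blast
  qed
  have lub': "\<forall>T\<subseteq>M. \<exists>x. is_lub M le' T x"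
  proof (intro allI impI)
    fix T assume T: "T \<subseteq> M"
    obtain x where x: "is_lub L le (k ` T) x" using lubex kT[OF T] by blast
    have xL: "x \<in> L" using x by (simp add: is_lub_def)
    have "is_lub M le' (g ` (k ` T)) (g x)" using lub_g[OF kT[OF T] xL] x by simp
    then show "\<exists>x. is_lub M le' T x" using img_k[OF T] by auto
  qed
  have glb': "\<forall>T\<subseteq>M. finite T \<longrightarrow> (\<exists>x. is_glb M le' T x)"
  proof (intro allI impI)
    fix T assume T: "T \<subseteq> M" and fin: "finite T"
    obtain x where x: "is_glb L le (k ` T) x" using glbex kT[OF T] fin by blast
    have xL: "x \<in> L" using x by (simp add: is_glb_def)
    have "is_glb M le' (g ` (k ` T)) (g x)" using glb_g[OF kT[OF T] xL] x by simp
    then show "\<exists>x. is_glb M le' T x" using img_k[OF T] by auto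
  qed
  have dist': "\<forall>a\<in>M. \<forall>T\<subseteq>M. \<forall>x y. is_lub M le' T x \<longrightarrow> is_glb M le' {a, x} y \<longrightarrow>
        is_lub M le' {z. \<exists>s\<in>T. is_glb M le' {a, s} z} y"
  proof (intro ballI allI impI)
    fix a T x y assume a: "a \<in> M" and T: "T \<subseteq> M" and hx: "is_lub M le' T x" and hy: "is_glb M le' {a, x} y"
    have x: "x \<in> M" using hx by (simp add: is_lub_def)
    have y: "y \<in> M" using hy by (simp add: is_glb_def)
    have "is_lub M le' (g ` (k ` T)) (g (k x))" using hx img_k[OF T] gk[OF x] by simp
    then have lx: "is_lub L le (k ` T) (k x)" using lub_g[OF kT[OF T] k[OF x]] by simp
    have "is_glb M le' (g ` {k a, k x}) (g (k y))" using hy gk[OF a] gk[OF x] gk[OF y] by simp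
    then have gy: "is_glb L le {k a, k x} (k y)" using glb_g[of "{k a, k x}" "k y"] k[OF a] k[OF x] k[OF y] by simp
    define Z where "Z = {z. \<exists>s\<in>k ` T. is_glb L le {k a, s} z}"
    have lZ: "is_lub L le Z (k y)" using dist k[OF a] kT[OF T] lx gy unfolding Z_def by blast
    have ZL: "Z \<subseteq> L" unfolding Z_def is_glb_def by blast
    have "is_lub M le' (g ` Z) (g (k y))" using lub_g[OF ZL k[OF y]] lZ by simp
    moreover have "g ` Z = {z. \<exists>s\<in>T. is_glb M le' {a, s} z}"
    proof
      show "g ` Z \<subseteq> {z. \<exists>s\<in>T. is_glb M le' {a, s} z}"
      proof
        fix w assume "w \<in> g ` Z"
        then obtain z t where z: "w = g z" "t \<in> T" "is_glb L le {k a, k t} z" unfolding Z_def by blast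
        have zL: "z \<in> L" using z(3) by (simp add: is_glb_def)
        have tM: "t \<in> M" using z(2) T by blast
        have "is_glb M le' (g ` {k a, k t}) (g z)" using glb_g[of "{k a, k t}" z] k[OF a] k[OF tM] zL z(3) by simp
        then have "is_glb M le' {a, t} w" using gk[OF a] gk[OF tM] z(1) by simp
        then show "w \<in> {z. \<exists>s\<in>T. is_glb M le' {a, s} z}" using z(2) by blast
      qed
    next
      show "{z. \<exists>s\<in>T. is_glb M le' {a, s} z} \<subseteq> g ` Z"
      proof
        fix w assume "w \<in> {z. \<exists>s\<in>T. is_glb M le' {a, s} z}"
        then obtain t where t: "t \<in> T" "is_glb M le' {a, t} w" by blast
        have tM: "t \<in> M" using t(1) T by blast
        have wM: "w \<in> M" using t(2) by (simp add: is_glb_def)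
        have "is_glb M le' (g ` {k a, k t}) (g (k w))" using t(2) gk[OF a] gk[OF tM] gk[OF wM] by simp
        then have "is_glb L le {k a, k t} (k w)" using glb_g[of "{k a, k t}" "k w"] k[OF a] k[OF tM] k[OF wM] by simp
        then have "k w \<in> Z" unfolding Z_def using t(1) by blast
        then show "w \<in> g ` Z" using gk[OF wM] by (metis imageI)
      qed
    qed
    ultimately show "is_lub M le' {z. \<exists>s\<in>T. is_glb M le' {a, s} z} y" using gk[OF y] by simp
  qed
  show ?thesis unfolding is_frame_def using po' lub' glb' dist' by (intro conjI)
qed

end


lemma ess_surj:
  fixes L :: "'c set"
  assumes fr: "is_frame L le"
  shows "\<exists>A :: 'c set set ialg. constructible_alg A \<and> frame_iso (opens A) (ia_le A) L le"
proof -
  interpret frm L le using fr by (rule frm.intro)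
  let ?k = "inv_into L phi"
  have inj: "inj_on phi L" unfolding inj_on_def using phi_inj by blast
  interpret oiso L le "phi ` L" "ia_le AA" phi ?k
  proof (unfold_locales)
    fix x assume "x \<in> L" then show "phi x \<in> phi ` L" by (rule imageI)
  next
    fix y assume "y \<in> phi ` L" then show "?k y \<in> L" by (rule inv_into_into)
  next
    fix x assume "x \<in> L" then show "?k (phi x) = x" using inj by (simp add: inv_into_f_f)
  next
    fix y assume "y \<in> phi ` L" then show "phi (?k y) = y" by (rule f_inv_into_f)
  next
    fix x y assume "x \<in> L" "y \<in> L" then show "ia_le AA (phi x) (phi y) \<longleftrightarrow> le x y"
      by (simp add: AA_le phi_le)
  qed
  have c: "constructible_alg AA"
    unfolding constructible_alg_def essential_def opens_AA
    using AA_ia gen_CC frame_M[OF fr] by simp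
  have "frame_iso (opens AA) (ia_le AA) L le"
    unfolding frame_iso_def opens_AA
  proof (intro exI conjI ballI)
    show "frame_hom (phi ` L) (ia_le AA) L le ?k" by (rule hom_k)
    show "frame_hom L le (phi ` L) (ia_le AA) phi" by (rule hom_g)
    fix x assume "x \<in> phi ` L" then show "phi (?k x) = x" by (rule f_inv_into_f)
  next
    fix x assume "x \<in> L" then show "?k (phi x) = x" using inj by (simp add: inv_into_f_f)
  qed
  then show ?thesis using c by blast
qed

theorem theorem4p6:
  shows
    \<comment> \<open>the open-element functor O : Cons \<rightarrow> Frm is well defined on objects and morphisms\<close>
    "(\<forall>(A :: 'a ialg). constructible_alg A \<longrightarrow> is_frame (opens A) (ia_le A))
   \<and> (\<forall>(A :: 'a ialg) (B :: 'b ialg) f. constructible_alg A \<longrightarrow> constructible_alg B \<longrightarrow>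
        constructible_hom A B f \<longrightarrow> frame_hom (opens A) (ia_le A) (opens B) (ia_le B) f)
   \<comment> \<open>faithful\<close>
   \<and> (\<forall>(A :: 'a ialg) (B :: 'b ialg) f g. constructible_alg A \<longrightarrow> constructible_alg B \<longrightarrow>
        constructible_hom A B f \<longrightarrow> constructible_hom A B g \<longrightarrow>
        (\<forall>a\<in>opens A. f a = g a) \<longrightarrow> (\<forall>a\<in>ia_carrier A. f a = g a))
   \<comment> \<open>full\<close>
   \<and> (\<forall>(A :: 'a ialg) (B :: 'b ialg) h. constructible_alg A \<longrightarrow> constructible_alg B \<longrightarrow>
        frame_hom (opens A) (ia_le A) (opens B) (ia_le B) h \<longrightarrow>
        (\<exists>f. constructible_hom A B f \<and> (\<forall>a\<in>opens A. f a = h a)))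
   \<comment> \<open>essentially surjective\<close>
   \<and> (\<forall>(L :: 'c set) le. is_frame L le \<longrightarrow>
        (\<exists>A :: 'c set set ialg. constructible_alg A \<and> frame_iso (opens A) (ia_le A) L le))"
proof (intro conjI allI impI)
  fix A :: "'a ialg" assume "constructible_alg A"
  then show "is_frame (opens A) (ia_le A)" unfolding constructible_alg_def by (elim conjE)
next
  fix A :: "'a ialg" and B :: "'b ialg" and f
  assume "constructible_hom A B f"
  then show "frame_hom (opens A) (ia_le A) (opens B) (ia_le B) f"
    unfolding constructible_hom_def by (elim conjE)
next
  fix A :: "'a ialg" and B :: "'b ialg" and f g
  assume h: "constructible_alg A" "constructible_alg B" "constructible_hom A B f" "constructible_hom A B g"
    "\<forall>a\<in>opens A. f a = g a"
  show "\<forall>a\<in>ia_carrier A. f a = g a" by (rule faithful_thm[OF h(1) h(3) h(4) h(5)])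
next
  fix A :: "'a ialg" and B :: "'b ialg" and h
  assume "constructible_alg A" "constructible_alg B" "frame_hom (opens A) (ia_le A) (opens B) (ia_le B) h"
  then show "\<exists>f. constructible_hom A B f \<and> (\<forall>a\<in>opens A. f a = h a)" by (rule full_thm)
next
  fix L :: "'c set" and le
  assume "is_frame L le"
  then show "\<exists>A :: 'c set set ialg. constructible_alg A \<and> frame_iso (opens A) (ia_le A) L le"
    by (rule ess_surj)
qed

end
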